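(* Suppose the standing assumptions (1)–(5) below hold. Let the updated dataset be $\mathcal{D}'=(\mathbf{Z}',\mathbf{y})$, which differs from $\mathcal{D}=(\mathbf{Z},\mathbf{y})$ only in the embedding of the $n$-th training graph: $\mathbf{z}_i'=\mathbf{z}_i$ for $i<n$ and $\mathbf{z}_n'=\Phi(\mathbf{S}_n,\mathbf{x}_n')$, where $\mathbf{x}_n'\in\mathbb{R}^{g_n}$ agrees with $\mathbf{x}_n$ except that $[\mathbf{x}_n']_{g_n}=0$ (feature removal of the $g_n$-th node). Let $B$ be the upper frame constant of the graph wavelets used in the GST. Then the updated model $\mathbf{w}'=\mathbf{w}^\star+\mathbf{H}_{\mathbf{w}^\star}^{-1}\Delta$ satisfies $$\|\nabla L(\mathbf{w}',\mathcal{D}')\|\leq \frac{\gamma_2 F^3}{\lambda^2 n}\min\left\{4C_1^2,\ \frac{(\gamma_1 C_1 F^2+\lambda C_2 F)^2}{\lambda^2 g_n}\right\},\qquad F=\sqrt{\sum_{l=0}^{L-1}B^{2l}}.$$ In particular, for tight energy-preserving wavelets one has $B=1$ and $F=\sqrt{L}$.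
   Context: Setting (graph classification). There are $n$ training graphs $\mathcal{G}_1,\dots,\mathcal{G}_n$. Graph $\mathcal{G}_i$ has $g_i$ nodes, a symmetric adjacency matrix $\mathbf{S}_i\in\mathbb{R}^{g_i\times g_i}$ (the graph shift operator), a node signal $\mathbf{x}_i\in\mathbb{R}^{g_i}$ (one scalar feature per node) and a label $y_i$. Graph scattering transform (GST). Fix positive integers $J,L$ and wavelet kernel functions $h_1,\dots,h_J:\mathbb{R}\to\mathbb{R}$. For a symmetric $\mathbf{S}=\mathbf{V}\mathbf{\Lambda}\mathbf{V}^T$ with eigenvalues $\lambda_1,\dots,\lambda_g$, set $\mathbf{H}_j(\mathbf{S})=\mathbf{V}\,\mathrm{diag}(h_j(\lambda_1),\dots,h_j(\lambda_g))\mathbf{V}^T$. The wavelets form a frame: there are constants $0<A\le B$ with $A^2\|\mathbf{x}\|^2\le\sum_{j=1}^J\|\mathbf{H}_j(\mathbf{S})\mathbf{x}\|^2\le B^2\|\mathbf{x}\|^2$ for all $\mathbf{x}$. Let $\rho$ be the entrywise absolute value. For a path $p=(j_1,\dots,j_l)$ with $j_k\in\{1,\dots,J\}$ and $0\le l\le L-1$, define $\Phi_{()}(\mathbf{S},\mathbf{x})=\mathbf{x}$ and $\Phi_{(j_1,\dots,j_l)}(\mathbf{S},\mathbf{x})=\rho\big(\mathbf{H}_{j_l}(\mathbf{S})\Phi_{(j_1,\dots,j_{l-1})}(\mathbf{S},\mathbf{x})\big)$, and the scalar coefficient $\phi_p(\mathbf{S},\mathbf{x})=U\Phi_p(\mathbf{S},\mathbf{x})$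 with the averaging operator $U=\frac{1}{g}\mathbf{1}^T$ ($g$ the number of nodes). The embedding $\Phi(\mathbf{S},\mathbf{x})\in\mathbb{R}^d$, $d=\sum_{l=0}^{L-1}J^l$, is the concatenation of all $\phi_p(\mathbf{S},\mathbf{x})$. Set $\mathbf{z}_i=\Phi(\mathbf{S}_i,\mathbf{x}_i)$, let $\mathbf{Z}$ have rows $\mathbf{z}_i^T$, and $\mathcal{D}=(\mathbf{Z},\mathbf{y})$. Learning and update. $\ell(s,y)$ is convex and twice differentiable in $s$; $\ell'$, $\ell''$ denote derivatives in $s$, and $\nabla$, $\nabla^2$ denote gradient/Hessian in $\mathbf{w}$. For a dataset $\mathcal{D}=(\mathbf{Z},\mathbf{y})$, $L(\mathbf{w},\mathcal{D})=\sum_{i=1}^n\big(\ell(\mathbf{w}^T\mathbf{z}_i,y_i)+\frac{\lambda}{2}\|\mathbf{w}\|^2\big)$ with $\lambda>0$, and $\mathbf{w}^\star=\arg\min_{\mathbf{w}}L(\mathbf{w},\mathcal{D})$. For the updated dataset $\mathcal{D}'$, set $\mathbf{H}_{\mathbf{w}^\star}=\nabla^2L(\mathbf{w}^\star,\mathcal{D}')$ and $\Delta=\nabla L(\mathbf{w}^\star,\mathcal{D})-\nabla L(\mathbf{w}^\star,\mathcal{D}')$. Norms are $\ell_2$ for vectors and operator norm for matrices. Standing assumptions: there are constants $C_1,C_2,\gamma_1,\gamma_2$ such that for every embedding $\mathbf{z}_i$ (of $\mathcal{D}$ or $\mathcal{D}'$) and every $\mathbf{w}\in\mathbb{R}^d$: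 (1) $\|\nabla\ell(\mathbf{w}^T\mathbf{z}_i,y_i)\|\le C_1$; (2) $|\ell'(\mathbf{w}^T\mathbf{z}_i,y_i)|\le C_2$; (3) $\ell'$ is $\gamma_1$-Lipschitz; (4) $\ell''$ is $\gamma_2$-Lipschitz; (5) the signals satisfy $|[\mathbf{x}_i]_j|\le1$ for all $i$ and all $j\in\{1,\dots,g_i\}$. *)

theory Defs
  imports "HOL-Analysis.Analysis" "Jordan_Normal_Form.Matrix"
begin

definition vnorm :: "real vec \<Rightarrow> real" where
  "vnorm v = sqrt (scalar_prod v v)"

definition diagm :: "nat \<Rightarrow> (nat \<Rightarrow> real) \<Rightarrow> real mat" where
  "diagm g f = mat g g (\<lambda>(i,j). if i = j then f i else 0)"

definition matfun :: "(real \<Rightarrow> real) \<Rightarrow> real mat \<Rightarrow> real mat" where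
  "matfun h S = (SOME M. \<exists>V lam. V \<in> carrier_mat (dim_row S) (dim_row S)
      \<and> transpose_mat V * V = 1\<^sub>m (dim_row S)
      \<and> S = V * diagm (dim_row S) lam * transpose_mat V
      \<and> M = V * diagm (dim_row S) (\<lambda>k. h (lam k)) * transpose_mat V)"

definition matinv :: "real mat \<Rightarrow> real mat" where
  "matinv H = (SOME B. B \<in> carrier_mat (dim_row H) (dim_row H)
      \<and> B * H = 1\<^sub>m (dim_row H) \<and> H * B = 1\<^sub>m (dim_row H))"

definition wavelet :: "(nat \<Rightarrow> real \<Rightarrow> real) \<Rightarrow> nat \<Rightarrow> real mat \<Rightarrow> real mat" where
  "wavelet h j S = matfun (h j) S"

text \<open>Phi_p(S,x) for a path p = [j_1,...,j_l]:
  Phi_[] = x, Phi_(p@[j]) = rho(H_j(S) Phi_p), rho = entrywise absolute value.\<close>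
definition Phi_path :: "(nat \<Rightarrow> real \<Rightarrow> real) \<Rightarrow> real mat \<Rightarrow> real vec \<Rightarrow> nat list \<Rightarrow> real vec" where
  "Phi_path h S x p = foldl (\<lambda>v j. map_vec abs (wavelet h j S *\<^sub>v v)) x p"

definition phi_path :: "(nat \<Rightarrow> real \<Rightarrow> real) \<Rightarrow> real mat \<Rightarrow> real vec \<Rightarrow> nat list \<Rightarrow> real" where
  "phi_path h S x p = (\<Sum>k<dim_vec x. Phi_path h S x p $ k) / real (dim_vec x)"

definition gst_paths :: "nat \<Rightarrow> nat \<Rightarrow> nat list list" where
  "gst_paths J L = concat (map (\<lambda>l. List.n_lists l [1..<Suc J]) [0..<L])"

definition gst :: "(nat \<Rightarrow> real \<Rightarrow> real) \<Rightarrow> nat \<Rightarrow> nat \<Rightarrow> real mat \<Rightarrow> real vec \<Rightarrow> real vec" where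
  "gst h J L S x = vec_of_list (map (phi_path h S x) (gst_paths J L))"

definition lossL :: "(real \<Rightarrow> 'y \<Rightarrow> real) \<Rightarrow> real \<Rightarrow> nat \<Rightarrow> (nat \<Rightarrow> real vec) \<Rightarrow> (nat \<Rightarrow> 'y)
    \<Rightarrow> real vec \<Rightarrow> real" where
  "lossL l lam n Z y w = (\<Sum>i<n. l (scalar_prod w (Z i)) (y i) + lam / 2 * (vnorm w)\<^sup>2)"

text \<open>Gradient in w of L(w,D), in terms of l' = d l / d s:
  sum_{i<n} (l'(w^T z_i, y_i) z_i + lambda w).\<close>
definition gradL :: "(real \<Rightarrow> 'y \<Rightarrow> real) \<Rightarrow> real \<Rightarrow> nat \<Rightarrow> (nat \<Rightarrow> real vec) \<Rightarrow> (nat \<Rightarrow> 'y)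
    \<Rightarrow> real vec \<Rightarrow> real vec" where
  "gradL l' lam n Z y w = vec (dim_vec w)
     (\<lambda>k. \<Sum>i<n. l' (scalar_prod w (Z i)) (y i) * (Z i $ k) + lam * (w $ k))"

text \<open>Hessian in w of L(w,D), in terms of l'' = d^2 l / d s^2:
  sum_{i<n} (l''(w^T z_i, y_i) z_i z_i^T + lambda I).\<close>
definition hessL :: "(real \<Rightarrow> 'y \<Rightarrow> real) \<Rightarrow> real \<Rightarrow> nat \<Rightarrow> (nat \<Rightarrow> real vec) \<Rightarrow> (nat \<Rightarrow> 'y)
    \<Rightarrow> real vec \<Rightarrow> real mat" where
  "hessL l'' lam n Z y w = mat (dim_vec w) (dim_vec w)
     (\<lambda>(k,m). \<Sum>i<n. l'' (scalar_prod w (Z i)) (y i) * (Z i $ k) * (Z i $ m)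
                     + (if k = m then lam else 0))"

end

theory Submission
  imports Defs "Jordan_Normal_Form.Schur_Decomposition" "HOL-Computational_Algebra.Fundamental_Theorem_Algebra"
begin

lemma sp_vec: "dim_vec v = n \<Longrightarrow> vec n f \<bullet> v = (\<Sum>j<n. f j * v $ j)"
  by (auto simp: scalar_prod_def lessThan_atLeast0 intro!: sum.cong)

lemma mv_idx: "A \<in> carrier_mat n m \<Longrightarrow> dim_vec v = m \<Longrightarrow> i < n \<Longrightarrow>
  (A *\<^sub>v v) $ i = (\<Sum>j<m. A $$ (i,j) * v $ j)"
  by (auto simp: scalar_prod_def lessThan_atLeast0 row_def intro!: sum.cong)

lemma real_sym_eigvec:
  fixes S :: "real mat"
  assumes S: "S \<in> carrier_mat n n" and sym: "transpose_mat S = S" and n: "n > 0"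
  shows "\<exists>u \<mu>. u \<in> carrier_vec n \<and> u \<noteq> 0\<^sub>v n \<and> S *\<^sub>v u = \<mu> \<cdot>\<^sub>v u"
proof -
  define Sc where "Sc = map_mat complex_of_real S"
  have Sc: "Sc \<in> carrier_mat n n" using S by (simp add: Sc_def)
  have symS: "\<And>i j. i < n \<Longrightarrow> j < n \<Longrightarrow> S $$ (i,j) = S $$ (j,i)"
    using sym S by (metis carrier_matD(1) carrier_matD(2) index_transpose_mat(1))
  have "degree (char_poly Sc) = n" using degree_monic_char_poly[OF Sc] by simp
  hence "\<not> constant (poly (char_poly Sc))" using n by (simp add: constant_degree)
  then obtain e where "poly (char_poly Sc) e = 0" using fundamental_theorem_of_algebra by blast
  hence "eigenvalue Sc e" using eigenvalue_root_char_poly[OF Sc] by simp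
  then obtain v where ev: "eigenvector Sc v e" unfolding eigenvalue_def by blast
  hence v: "v \<in> carrier_vec n" and v0: "v \<noteq> 0\<^sub>v n" and Sv: "Sc *\<^sub>v v = e \<cdot>\<^sub>v v"
    unfolding eigenvector_def using Sc by auto
  have Svi: "(\<Sum>j<n. of_real (S $$ (i,j)) * v $ j) = e * v $ i" if i: "i < n" for i
  proof -
    have "(Sc *\<^sub>v v) $ i = e * v $ i" using Sv i v by simp
    moreover have "(Sc *\<^sub>v v) $ i = (\<Sum>j<n. of_real (S $$ (i,j)) * v $ j)"
      using i Sc S v by (subst mv_idx[of _ n n]) (auto simp: Sc_def)
    ultimately show ?thesis by simp
  qed
  define q where "q = (\<Sum>i<n. cnj (v $ i) * (\<Sum>j<n. of_real (S $$ (i,j)) * v $ j))"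
  define N where "N = (\<Sum>i<n. cnj (v $ i) * v $ i)"
  have qN: "q = e * N" unfolding q_def N_def using Svi
    by (simp add: sum_distrib_left mult_ac)
  have "cnj q = (\<Sum>i<n. (\<Sum>j<n. v $ i * of_real (S $$ (i,j)) * cnj (v $ j)))"
    unfolding q_def by (simp add: sum_distrib_left mult_ac)
  also have "\<dots> = (\<Sum>j<n. (\<Sum>i<n. v $ i * of_real (S $$ (i,j)) * cnj (v $ j)))"
    by (rule sum.swap)
  also have "\<dots> = q" unfolding q_def
    by (auto simp: sum_distrib_left mult_ac symS intro!: sum.cong)
  finally have cq: "cnj q = q" .
  have Nre: "N = of_real (\<Sum>i<n. (cmod (v $ i))\<^sup>2)"
    unfolding N_def of_real_sum by (intro sum.cong refl) (metis complex_norm_square mult.commute)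
  obtain i0 where i0: "i0 < n" "v $ i0 \<noteq> 0" using v0 v by (metis carrier_vecD index_zero_vec(1) eq_vecI index_zero_vec(2))
  have "(\<Sum>i<n. (cmod (v $ i))\<^sup>2) \<ge> (cmod (v $ i0))\<^sup>2"
    using i0 by (intro member_le_sum) auto
  hence Npos: "(\<Sum>i<n. (cmod (v $ i))\<^sup>2) > 0" using i0 by (smt (verit) zero_less_norm_iff zero_less_power)
  hence "N \<noteq> 0" using Nre by (metis less_irrefl of_real_eq_0_iff)
  have "cnj e * N = e * N" using cq qN Nre by (metis complex_cnj_complex_of_real complex_cnj_mult)
  hence ce: "cnj e = e" using \<open>N \<noteq> 0\<close> by simp
  define r where "r = Re e"
  have er: "e = of_real r" using ce unfolding r_def by (metis Reals_cnj_iff complex_is_Real_iff of_real_Re)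
  define a where "a = vec n (\<lambda>i. Re (v $ i))"
  define b where "b = vec n (\<lambda>i. Im (v $ i))"
  have Sa: "S *\<^sub>v a = r \<cdot>\<^sub>v a" and Sb: "S *\<^sub>v b = r \<cdot>\<^sub>v b"
  proof -
    have "(S *\<^sub>v a) $ i = r * a $ i \<and> (S *\<^sub>v b) $ i = r * b $ i" if i: "i < n" for i
    proof -
      have eq: "(\<Sum>j<n. of_real (S $$ (i,j)) * v $ j) = of_real r * v $ i" using Svi[OF i] er by simp
      have "(S *\<^sub>v a) $ i = (\<Sum>j<n. S $$ (i,j) * Re (v $ j))"
        using i S by (subst mv_idx[of _ n n]) (auto simp: a_def)
      also have "\<dots> = Re (\<Sum>j<n. of_real (S $$ (i,j)) * v $ j)" by (simp add: Re_sum)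
      also have "\<dots> = r * a $ i" using eq i by (simp add: a_def)
      finally have 1: "(S *\<^sub>v a) $ i = r * a $ i" .
      have "(S *\<^sub>v b) $ i = (\<Sum>j<n. S $$ (i,j) * Im (v $ j))"
        using i S by (subst mv_idx[of _ n n]) (auto simp: b_def)
      also have "\<dots> = Im (\<Sum>j<n. of_real (S $$ (i,j)) * v $ j)" by (simp add: Im_sum)
      also have "\<dots> = r * b $ i" using eq i by (simp add: b_def)
      finally show ?thesis using 1 by simp
    qed
    thus "S *\<^sub>v a = r \<cdot>\<^sub>v a" "S *\<^sub>v b = r \<cdot>\<^sub>v b" using S
      by (auto intro!: eq_vecI simp: a_def b_def)
  qed
  have "a \<noteq> 0\<^sub>v n \<or> b \<noteq> 0\<^sub>v n"
  proof (rule ccontr)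
    assume "\<not> ?thesis"
    hence "a $ i0 = 0" "b $ i0 = 0" using i0 by auto
    hence "v $ i0 = 0" using i0 by (simp add: a_def b_def complex_eq_iff)
    thus False using i0 by simp
  qed
  moreover have "a \<in> carrier_vec n" "b \<in> carrier_vec n" by (auto simp: a_def b_def)
  ultimately show ?thesis using Sa Sb by blast
qed



lemma conj_real_vec[simp]: "conjugate (w :: real vec) = w"
  by (auto simp: conjugate_vec_def intro!: eq_vecI)

lemma orth_completion:
  fixes u :: "real vec"
  assumes u: "u \<in> carrier_vec n" and u1: "u \<bullet> u = 1"
  shows "\<exists>us. length us = n \<and> set us \<subseteq> carrier_vec n \<and> us ! 0 = u
     \<and> (\<forall>i<n. \<forall>j<n. us ! i \<bullet> us ! j = (if i = j then 1 else 0))"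
proof -
  have u0: "u \<noteq> 0\<^sub>v n" using u1 u by auto
  interpret cof_vec_space n "TYPE(real)" .
  define b where "b = basis_completion u"
  from basis_completion[OF u u0, folded b_def]
  have span_b: "span (set b) = carrier_vec n" and dist_b: "distinct b"
    and indep: "\<not> lin_dep (set b)" and b: "set b \<subseteq> carrier_vec n"
    and len_b: "length b = n" by auto
  obtain vs where bv: "b = u # vs" unfolding b_def basis_completion_def by (auto simp: Let_def)
  define ws where "ws = gram_schmidt n b"
  from gram_schmidt_result[OF b dist_b indep refl, folded ws_def]
  have ws: "set ws \<subseteq> carrier_vec n" "corthogonal ws" "length ws = n"
    by (auto simp: len_b)
  from gram_schmidt_hd[OF u, of vs, folded bv] have hdws: "hd ws = u" unfolding ws_def .
  have n0: "n > 0" using len_b bv by auto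
  have ws0: "ws ! 0 = u" using hdws n0 ws(3) by (metis hd_conv_nth list.size(3) not_less0)
  have orth: "\<And>i j. i < n \<Longrightarrow> j < n \<Longrightarrow> (ws ! i \<bullet> ws ! j = 0) = (i \<noteq> j)"
    using ws(2) ws(3) unfolding corthogonal_def by auto
  have wsc: "\<And>i. i < n \<Longrightarrow> ws ! i \<in> carrier_vec n" using ws by auto
  have pos: "ws ! i \<bullet> ws ! i > 0" if "i < n" for i
  proof -
    have "ws ! i \<bullet> ws ! i \<ge> 0" by (simp add: scalar_prod_def sum_nonneg)
    moreover have "ws ! i \<bullet> ws ! i \<noteq> 0" using orth[OF that that] by simp
    ultimately show ?thesis by simp
  qed
  define us where "us = map (\<lambda>w. (1 / sqrt (w \<bullet> w)) \<cdot>\<^sub>v w) ws"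
  have usi: "\<And>i. i < n \<Longrightarrow> us ! i = (1 / sqrt (ws ! i \<bullet> ws ! i)) \<cdot>\<^sub>v ws ! i"
    unfolding us_def using ws(3) by simp
  have "length us = n" using ws by (simp add: us_def)
  moreover have "set us \<subseteq> carrier_vec n" using ws(1) by (auto simp: us_def)
  moreover have "us ! 0 = u" using usi[OF n0] ws0 u1 by simp
  moreover have "\<forall>i<n. \<forall>j<n. us ! i \<bullet> us ! j = (if i = j then 1 else 0)"
  proof (intro allI impI)
    fix i j assume i: "i < n" and j: "j < n"
    have "us ! i \<bullet> us ! j = (1 / sqrt (ws ! i \<bullet> ws ! i)) * (1 / sqrt (ws ! j \<bullet> ws ! j)) * (ws ! i \<bullet> ws ! j)"
      using usi[OF i] usi[OF j] wsc[OF i] wsc[OF j] by simp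
    also have "\<dots> = (if i = j then 1 else 0)"
    proof (cases "i = j")
      case True
      have "sqrt (ws ! i \<bullet> ws ! i) * sqrt (ws ! i \<bullet> ws ! i) = ws ! i \<bullet> ws ! i"
        using pos[OF i] by simp
      then show ?thesis using True pos[OF i] by (simp add: field_simps)
    next
      case False thus ?thesis using orth[OF i j] by simp
    qed
    finally show "us ! i \<bullet> us ! j = (if i = j then 1 else 0)" .
  qed
  ultimately show ?thesis by blast
qed



lemma diag_entry:
  assumes A: "A \<in> carrier_mat r n" and B: "B \<in> carrier_mat c n" and i: "i < r" and j: "j < c"
  shows "(A * diagm n lam * transpose_mat B) $$ (i,j) = (\<Sum>k<n. A $$ (i,k) * lam k * B $$ (j,k))"
proof -
  have D: "diagm n lam \<in> carrier_mat n n" by (simp add: diagm_def)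
  have "(A * diagm n lam * transpose_mat B) $$ (i,j) = row (A * diagm n lam) i \<bullet> col (transpose_mat B) j"
    by (rule index_mult_mat(1)) (use A B D i j in auto)
  also have "row (A * diagm n lam) i = vec n (\<lambda>k. A $$ (i,k) * lam k)"
  proof (rule eq_vecI)
    fix k assume "k < dim_vec (vec n (\<lambda>k. A $$ (i,k) * lam k))"
    hence k: "k < n" by simp
    have "row (A * diagm n lam) i $ k = row A i \<bullet> col (diagm n lam) k" using A D i k by simp
    also have "\<dots> = (\<Sum>l<n. A $$ (i,l) * (if l = k then lam k else 0))"
      using A i k by (auto simp: scalar_prod_def diagm_def lessThan_atLeast0 intro!: sum.cong)
    also have "\<dots> = A $$ (i,k) * lam k" using k by (simp add: if_distrib cong: if_cong)
    finally show "row (A * diagm n lam) i $ k = vec n (\<lambda>k. A $$ (i,k) * lam k) $ k" using k by simp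
  qed (use A D in simp)
  also have "vec n (\<lambda>k. A $$ (i,k) * lam k) \<bullet> col (transpose_mat B) j = (\<Sum>k<n. A $$ (i,k) * lam k * B $$ (j,k))"
    using B j by (subst sp_vec) auto
  finally show ?thesis .
qed

lemma tmult_entry:
  assumes A: "A \<in> carrier_mat r n" and B: "B \<in> carrier_mat r c" and i: "i < n" and j: "j < c"
  shows "(transpose_mat A * B) $$ (i,j) = (\<Sum>k<r. A $$ (k,i) * B $$ (k,j))"
  using A B i j by (auto simp: scalar_prod_def lessThan_atLeast0 intro!: sum.cong)

lemma spectral_real_sym:
  fixes S :: "real mat"
  assumes "S \<in> carrier_mat n n" and "transpose_mat S = S"
  shows "\<exists>V lam. V \<in> carrier_mat n n \<and> transpose_mat V * V = 1\<^sub>m n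
      \<and> S = V * diagm n lam * transpose_mat V"
  using assms
proof (induction n arbitrary: S)
  case 0
  have "S = 1\<^sub>m 0 * diagm 0 (\<lambda>_. 0) * transpose_mat (1\<^sub>m 0)"
    using 0 by (intro eq_matI) (auto simp: diagm_def)
  moreover have "transpose_mat (1\<^sub>m 0) * 1\<^sub>m 0 = (1\<^sub>m 0 :: real mat)" by simp
  moreover have "(1\<^sub>m 0 :: real mat) \<in> carrier_mat 0 0" by simp
  ultimately show ?case by blast
next
  case (Suc m S)
  let ?n = "Suc m"
  have S: "S \<in> carrier_mat ?n ?n" and symS: "transpose_mat S = S" using Suc by auto
  obtain u0 \<mu> where u0: "u0 \<in> carrier_vec ?n" "u0 \<noteq> 0\<^sub>v ?n" "S *\<^sub>v u0 = \<mu> \<cdot>\<^sub>v u0"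
    using real_sym_eigvec[OF S symS] by auto
  have "u0 \<bullet> u0 \<noteq> 0" using u0 by (metis carrier_vecD conjugate_square_eq_0_vec conj_real_vec)
  moreover have "u0 \<bullet> u0 \<ge> 0" by (simp add: scalar_prod_def sum_nonneg)
  ultimately have pos: "u0 \<bullet> u0 > 0" by simp
  define u where "u = (1 / sqrt (u0 \<bullet> u0)) \<cdot>\<^sub>v u0"
  have u: "u \<in> carrier_vec ?n" using u0 by (simp add: u_def)
  have "u \<bullet> u = (1 / sqrt (u0 \<bullet> u0)) * (1 / sqrt (u0 \<bullet> u0)) * (u0 \<bullet> u0)"
    using u0 by (simp add: u_def)
  also have "\<dots> = 1" using pos by (simp add: field_simps)
  finally have u1: "u \<bullet> u = 1" .
  have Su: "S *\<^sub>v u = \<mu> \<cdot>\<^sub>v u" using u0 S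
    by (simp add: u_def mult_mat_vec smult_smult_assoc mult.commute)
  obtain us :: "real vec list" where us: "length us = ?n" "set us \<subseteq> carrier_vec ?n" "us ! 0 = u"
     "\<And>i j. i < ?n \<Longrightarrow> j < ?n \<Longrightarrow> us ! i \<bullet> us ! j = (if i = j then 1 else 0)"
    using orth_completion[OF u u1] by blast
  define U where "U = mat_of_cols ?n us"
  have U: "U \<in> carrier_mat ?n ?n" using us mat_of_cols_carrier(1)[of ?n us] by (simp add: U_def)
  have colU: "\<And>j. j < ?n \<Longrightarrow> col U j = us ! j" using us unfolding U_def
    by (intro col_mat_of_cols) auto
  have UtU: "transpose_mat U * U = 1\<^sub>m ?n"
    using U colU us(4) by (intro eq_matI) auto
  have UUt: "U * transpose_mat U = 1\<^sub>m ?n"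
    using mat_mult_left_right_inverse[OF _ U UtU] U by simp
  define M where "M = transpose_mat U * S * U"
  have M: "M \<in> carrier_mat ?n ?n" using U S by (simp add: M_def)
  have symM: "transpose_mat M = M"
    using U S symS unfolding M_def
    by (simp add: transpose_mult[of _ ?n ?n _ ?n] assoc_mult_mat[of _ ?n ?n _ ?n _ ?n])
  have Mij: "\<And>i j. i < ?n \<Longrightarrow> j < ?n \<Longrightarrow> M $$ (i,j) = M $$ (j,i)"
    using symM M by (metis carrier_matD(1) carrier_matD(2) index_transpose_mat(1))
  have colSU: "col (S * U) 0 = \<mu> \<cdot>\<^sub>v u"
  proof -
    have "col (S * U) 0 = S *\<^sub>v col U 0" using S U by (simp add: col_mult2)
    thus ?thesis using colU[of 0] us(3) Su by simp
  qed
  have Mi0: "M $$ (i,0) = (if i = 0 then \<mu> else 0)" if i: "i < ?n" for i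
  proof -
    have "M = transpose_mat U * (S * U)" unfolding M_def using U S by simp
    hence "M $$ (i,0) = row (transpose_mat U) i \<bullet> col (S * U) 0" using U S i by simp
    also have "\<dots> = us ! i \<bullet> (\<mu> \<cdot>\<^sub>v u)" using colSU colU[OF i] U i by simp
    also have "\<dots> = \<mu> * (us ! i \<bullet> us ! 0)"
    proof -
      have "us ! i \<in> carrier_vec ?n" using us(1,2) i by (metis nth_mem subsetD)
      thus ?thesis using us(3) u by (simp add: scalar_prod_smult_right)
    qed
    finally show ?thesis using us(4)[OF i, of 0] by simp
  qed
  define S' where "S' = mat m m (\<lambda>(i,j). M $$ (Suc i, Suc j))"
  have S': "S' \<in> carrier_mat m m" by (simp add: S'_def)
  have symS': "transpose_mat S' = S'" using Mij by (auto simp: S'_def intro!: eq_matI)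
  obtain V' lam' where V': "V' \<in> carrier_mat m m" "transpose_mat V' * V' = 1\<^sub>m m"
    "S' = V' * diagm m lam' * transpose_mat V'" using Suc.IH[OF S' symS'] by blast
  define E where "E = mat ?n ?n (\<lambda>(i,j). if i = 0 \<and> j = 0 then 1 else if i = 0 \<or> j = 0 then 0 else V' $$ (i-1, j-1))"
  define lam where "lam = (\<lambda>k. if k = 0 then \<mu> else lam' (k - 1))"
  have E: "E \<in> carrier_mat ?n ?n" by (simp add: E_def)
  have V'e: "\<And>i j. i < m \<Longrightarrow> j < m \<Longrightarrow> (\<Sum>k<m. V' $$ (k,i) * V' $$ (k,j)) = (if i = j then 1 else 0)"
  proof -
    fix i j assume "i < m" "j < m"
    thus "(\<Sum>k<m. V' $$ (k,i) * V' $$ (k,j)) = (if i = j then 1 else 0)"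
      using tmult_entry[OF V'(1) V'(1), of i j] V'(2) by simp
  qed
  have EtE: "transpose_mat E * E = 1\<^sub>m ?n"
  proof (rule eq_matI)
    fix i j assume "i < dim_row (1\<^sub>m ?n)" "j < dim_col (1\<^sub>m (Suc m))"
    hence i: "i < ?n" and j: "j < ?n" by auto
    have "(transpose_mat E * E) $$ (i,j) = (\<Sum>k<?n. E $$ (k,i) * E $$ (k,j))"
      by (rule tmult_entry[OF E E i j])
    also have "\<dots> = E $$ (0,i) * E $$ (0,j) + (\<Sum>k<m. E $$ (Suc k,i) * E $$ (Suc k,j))"
      by (rule sum.lessThan_Suc_shift)
    also have "\<dots> = (if i = j then 1 else 0)"
    proof (cases i)
      case 0 thus ?thesis using j by (cases j) (auto simp: E_def)
    next
      case (Suc i')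
      show ?thesis
      proof (cases j)
        case 0 thus ?thesis using Suc i by (auto simp: E_def)
      next
        case (Suc j')
        have "(\<Sum>k<m. E $$ (Suc k,i) * E $$ (Suc k,j)) = (\<Sum>k<m. V' $$ (k,i') * V' $$ (k,j'))"
          using \<open>i = Suc i'\<close> Suc i j by (auto simp: E_def intro!: sum.cong)
        thus ?thesis using V'e[of i' j'] \<open>i = Suc i'\<close> Suc i j by (auto simp: E_def)
      qed
    qed
    finally show "(transpose_mat E * E) $$ (i,j) = 1\<^sub>m ?n $$ (i,j)" using i j by simp
  qed (use E in auto)
  have ME: "M = E * diagm ?n lam * transpose_mat E"
  proof (rule eq_matI)
    fix i j assume ij: "i < dim_row (E * diagm ?n lam * transpose_mat E)" "j < dim_col (E * diagm ?n lam * transpose_mat E)"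
    hence i: "i < ?n" and j: "j < ?n" using E by (auto simp: diagm_def)
    have "(E * diagm ?n lam * transpose_mat E) $$ (i,j) = (\<Sum>k<?n. E $$ (i,k) * lam k * E $$ (j,k))"
      by (rule diag_entry[OF E E i j])
    also have "\<dots> = E $$ (i,0) * lam 0 * E $$ (j,0) + (\<Sum>k<m. E $$ (i,Suc k) * lam (Suc k) * E $$ (j,Suc k))"
      by (rule sum.lessThan_Suc_shift)
    also have "\<dots> = M $$ (i,j)"
    proof (cases i)
      case 0 thus ?thesis using j Mi0[OF j] Mij[OF i j] by (cases j) (auto simp: E_def lam_def)
    next
      case (Suc i')
      show ?thesis
      proof (cases j)
        case 0 thus ?thesis using Suc i Mi0[OF i] by (auto simp: E_def)
      next
        case (Suc j')
        have "(\<Sum>k<m. E $$ (i,Suc k) * lam (Suc k) * E $$ (j,Suc k)) = (\<Sum>k<m. V' $$ (i',k) * lam' k * V' $$ (j',k))"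
          using \<open>i = Suc i'\<close> Suc i j by (auto simp: E_def lam_def intro!: sum.cong)
        also have "\<dots> = S' $$ (i', j')"
          using V'(3) diag_entry[OF V'(1) V'(1), of i' j' lam'] \<open>i = Suc i'\<close> Suc i j by simp
        also have "\<dots> = M $$ (i,j)" using \<open>i = Suc i'\<close> Suc i j by (simp add: S'_def)
        finally show ?thesis using \<open>i = Suc i'\<close> Suc i j by (simp add: E_def)
      qed
    qed
    finally show "M $$ (i,j) = (E * diagm ?n lam * transpose_mat E) $$ (i,j)" ..
  qed (use E M in \<open>auto simp: diagm_def\<close>)
  define V where "V = U * E"
  have V: "V \<in> carrier_mat ?n ?n" using U E by (simp add: V_def)
  have D: "diagm ?n lam \<in> carrier_mat ?n ?n" by (simp add: diagm_def)
  have tV: "transpose_mat V = transpose_mat E * transpose_mat U"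
    unfolding V_def by (rule transpose_mult[OF U E])
  have "transpose_mat V * V = (transpose_mat E * transpose_mat U) * (U * E)"
    using tV by (simp add: V_def)
  also have "\<dots> = transpose_mat E * (transpose_mat U * U) * E"
    using U E by (simp add: assoc_mult_mat[of _ ?n ?n _ ?n _ ?n])
  also have "\<dots> = 1\<^sub>m ?n" using UtU EtE E by simp
  finally have VtV: "transpose_mat V * V = 1\<^sub>m ?n" .
  have "V * diagm ?n lam * transpose_mat V = (U * E) * diagm ?n lam * (transpose_mat E * transpose_mat U)"
    using tV by (simp add: V_def)
  also have "\<dots> = U * (E * diagm ?n lam * transpose_mat E) * transpose_mat U"
    using U E D by (simp add: assoc_mult_mat[of _ ?n ?n _ ?n _ ?n])
  also have "\<dots> = U * M * transpose_mat U" using ME by simp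
  also have "\<dots> = (U * transpose_mat U) * S * (U * transpose_mat U)"
    unfolding M_def using U S by (simp add: assoc_mult_mat[of _ ?n ?n _ ?n _ ?n])
  also have "\<dots> = S" using UUt S by simp
  finally show ?case using V VtV by metis
qed



lemma matfun_carrier:
  assumes S: "S \<in> carrier_mat n n" and sym: "transpose_mat S = S"
  shows "matfun f S \<in> carrier_mat n n"
proof -
  have dS: "dim_row S = n" using S by simp
  let ?P = "\<lambda>M. \<exists>V lam. V \<in> carrier_mat (dim_row S) (dim_row S)
      \<and> transpose_mat V * V = 1\<^sub>m (dim_row S)
      \<and> S = V * diagm (dim_row S) lam * transpose_mat V
      \<and> M = V * diagm (dim_row S) (\<lambda>k. f (lam k)) * transpose_mat V"
  obtain V lam where V: "V \<in> carrier_mat n n" "transpose_mat V * V = 1\<^sub>m n"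
      "S = V * diagm n lam * transpose_mat V" using spectral_real_sym[OF S sym] by blast
  define M0 where "M0 = V * diagm n (\<lambda>k. f (lam k)) * transpose_mat V"
  have "\<exists>V lam. V \<in> carrier_mat n n
      \<and> transpose_mat V * V = 1\<^sub>m n
      \<and> S = V * diagm n lam * transpose_mat V
      \<and> M0 = V * diagm n (\<lambda>k. f (lam k)) * transpose_mat V"
    using V M0_def by blast
  hence "?P M0" unfolding dS .
  hence "?P (matfun f S)" unfolding matfun_def by (rule someI)
  hence "\<exists>V lam. V \<in> carrier_mat n n
      \<and> transpose_mat V * V = 1\<^sub>m n
      \<and> S = V * diagm n lam * transpose_mat V
      \<and> matfun f S = V * diagm n (\<lambda>k. f (lam k)) * transpose_mat V" unfolding dS .
  then obtain V2 lam2 where "V2 \<in> carrier_mat n n"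
      "matfun f S = V2 * diagm n (\<lambda>k. f (lam2 k)) * transpose_mat V2" by blast
  moreover have "diagm n (\<lambda>k. f (lam2 k)) \<in> carrier_mat n n" by (simp add: diagm_def)
  ultimately show ?thesis by (metis mult_carrier_mat transpose_carrier_mat)
qed

lemma sum_list_concat_map: "sum_list (map f (concat xss)) = sum_list (map (\<lambda>xs. sum_list (map f xs)) xss)"
  by (induction xss) auto

lemma sum_list_swap:
  fixes f :: "'a \<Rightarrow> 'b \<Rightarrow> 'c::comm_monoid_add"
  shows
  "sum_list (map (\<lambda>a. sum_list (map (\<lambda>b. f a b) ys)) xs) = sum_list (map (\<lambda>b. sum_list (map (\<lambda>a. f a b) xs)) ys)"
proof (induction xs)
  case (Cons a xs)
  have "sum_list (map (\<lambda>b. f a b + sum_list (map (\<lambda>a. f a b) xs)) ys)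
     = sum_list (map (\<lambda>b. f a b) ys) + sum_list (map (\<lambda>b. sum_list (map (\<lambda>a. f a b) xs)) ys)"
    by (rule sum_list_addf)
  thus ?case using Cons by simp
qed simp

lemma upt_sum: "sum_list (map f [1..<Suc J]) = (\<Sum>j=1..J. f j)"
  by (metis atLeastLessThanSuc_atLeastAtMost set_upt sum_set_upt_conv_sum_list_nat)

lemma vnorm_sq: "(vnorm v)\<^sup>2 = v \<bullet> v"
  unfolding vnorm_def by (simp add: scalar_prod_def sum_nonneg)

lemma sq_nonneg_vec: "(v::real vec) \<bullet> v \<ge> 0"
  by (simp add: scalar_prod_def sum_nonneg)

lemma Phi_path_Cons: "Phi_path h S x (j # p) = Phi_path h S (map_vec abs (wavelet h j S *\<^sub>v x)) p"
  by (simp add: Phi_path_def)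

lemma Phi_path_Nil: "Phi_path h S x [] = x"
  by (simp add: Phi_path_def)

lemma Phi_carrier:
  assumes Wc: "\<And>j. j \<in> {1..J} \<Longrightarrow> wavelet h j S \<in> carrier_mat g g"
  shows "set p \<subseteq> {1..J} \<Longrightarrow> x \<in> carrier_vec g \<Longrightarrow> Phi_path h S x p \<in> carrier_vec g"
proof (induction p arbitrary: x)
  case Nil thus ?case by (simp add: Phi_path_Nil)
next
  case (Cons j p)
  have "map_vec abs (wavelet h j S *\<^sub>v x) \<in> carrier_vec g" using Wc[of j] Cons.prems by auto
  thus ?case using Cons by (simp add: Phi_path_Cons)
qed

lemma abs_diff_sq:
  fixes a b :: "real vec"
  assumes "a \<in> carrier_vec g" "b \<in> carrier_vec g"
  shows "(map_vec abs a - map_vec abs b) \<bullet> (map_vec abs a - map_vec abs b) \<le> (a - b) \<bullet> (a - b)"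
proof -
  have e: "(\<bar>x\<bar> - \<bar>y\<bar>) * (\<bar>x\<bar> - \<bar>y\<bar>) \<le> (x - y) * (x - y)" for x y :: real
    using abs_triangle_ineq3[of x y] abs_le_square_iff[of "\<bar>x\<bar> - \<bar>y\<bar>" "x - y"]
    by (simp add: power2_eq_square)
  show ?thesis using assms unfolding scalar_prod_def
    by simp (rule sum_mono, rule e)
qed

lemma Phi_diff:
  fixes B :: real
  assumes Wc: "\<And>j. j \<in> {1..J} \<Longrightarrow> wavelet h j S \<in> carrier_mat g g"
    and Fr: "\<And>v. v \<in> carrier_vec g \<Longrightarrow> (\<Sum>j=1..J. (vnorm (wavelet h j S *\<^sub>v v))\<^sup>2) \<le> B\<^sup>2 * (vnorm v)\<^sup>2"
  shows "u \<in> carrier_vec g \<Longrightarrow> v \<in> carrier_vec g \<Longrightarrow>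
    sum_list (map (\<lambda>p. (Phi_path h S u p - Phi_path h S v p) \<bullet> (Phi_path h S u p - Phi_path h S v p))
       (List.n_lists l [1..<Suc J])) \<le> B ^ (2 * l) * ((u - v) \<bullet> (u - v))"
proof (induction l arbitrary: u v)
  case 0 thus ?case by (simp add: Phi_path_Nil)
next
  case (Suc l u v)
  let ?W = "\<lambda>j. wavelet h j S"
  let ?f = "\<lambda>x p. Phi_path h S x p"
  let ?a = "\<lambda>j x. map_vec abs (?W j *\<^sub>v x)"
  let ?sq = "\<lambda>w::real vec. w \<bullet> w"
  have "sum_list (map (\<lambda>p. ?sq (?f u p - ?f v p)) (List.n_lists (Suc l) [1..<Suc J]))
      = sum_list (map (\<lambda>ys. sum_list (map (\<lambda>y. ?sq (?f (?a y u) ys - ?f (?a y v) ys)) [1..<Suc J])) (List.n_lists l [1..<Suc J]))"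
    by (simp add: sum_list_concat_map o_def Phi_path_Cons)
  also have "\<dots> = sum_list (map (\<lambda>y. sum_list (map (\<lambda>ys. ?sq (?f (?a y u) ys - ?f (?a y v) ys)) (List.n_lists l [1..<Suc J]))) [1..<Suc J])"
    by (rule sum_list_swap)
  also have "\<dots> \<le> sum_list (map (\<lambda>y. B ^ (2 * l) * ?sq (?W y *\<^sub>v (u - v))) [1..<Suc J])"
  proof (rule sum_list_mono)
    fix y assume "y \<in> set [1..<Suc J]"
    hence y: "y \<in> {1..J}" by auto
    have au: "?a y u \<in> carrier_vec g" and av: "?a y v \<in> carrier_vec g" using Wc[OF y] Suc.prems by auto
    have "sum_list (map (\<lambda>ys. ?sq (?f (?a y u) ys - ?f (?a y v) ys)) (List.n_lists l [1..<Suc J]))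
        \<le> B ^ (2 * l) * ?sq (?a y u - ?a y v)" by (rule Suc.IH[OF au av])
    also have "\<dots> \<le> B ^ (2 * l) * ?sq (?W y *\<^sub>v u - ?W y *\<^sub>v v)"
      by (rule mult_left_mono[OF abs_diff_sq[of _ g]]) (use Wc[OF y] Suc.prems in \<open>auto simp: zero_le_power_eq\<close>)
    also have "?W y *\<^sub>v u - ?W y *\<^sub>v v = ?W y *\<^sub>v (u - v)"
      using Wc[OF y] Suc.prems by (simp add: mult_minus_distrib_mat_vec)
    finally show "sum_list (map (\<lambda>ys. ?sq (?f (?a y u) ys - ?f (?a y v) ys)) (List.n_lists l [1..<Suc J]))
        \<le> B ^ (2 * l) * ?sq (?W y *\<^sub>v (u - v))" .
  qed
  also have "\<dots> = B ^ (2 * l) * sum_list (map (\<lambda>y. ?sq (?W y *\<^sub>v (u - v))) [1..<Suc J])"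
    by (rule sum_list_const_mult)
  also have "\<dots> = B ^ (2 * l) * (\<Sum>j=1..J. (vnorm (?W j *\<^sub>v (u - v)))\<^sup>2)"
    by (simp only: upt_sum vnorm_sq)
  also have "\<dots> \<le> B ^ (2 * l) * (B\<^sup>2 * (vnorm (u - v))\<^sup>2)"
    by (rule mult_left_mono[OF Fr]) (use Suc.prems in \<open>auto simp: zero_le_power_eq\<close>)
  also have "\<dots> = B ^ (2 * Suc l) * ((u - v) \<bullet> (u - v))"
    unfolding vnorm_sq by (simp add: power_add power_mult power2_eq_square)
  finally show ?case .
qed



lemma gst_dim: "dim_vec (gst h J L S x) = (\<Sum>k<L. J ^ k)"
proof -
  have "length (gst_paths J L) = sum_list (map (\<lambda>l. J ^ l) [0..<L])"
    unfolding gst_paths_def by (simp add: length_concat length_n_lists o_def del: upt_Suc)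
  also have "\<dots> = (\<Sum>k<L. J ^ k)"
    by (simp add: sum_set_upt_conv_sum_list_nat[symmetric] lessThan_atLeast0)
  finally show ?thesis by (simp add: gst_def)
qed

lemma gst_paths_set: "p \<in> set (gst_paths J L) \<Longrightarrow> set p \<subseteq> {1..J}"
  unfolding gst_paths_def by (auto simp: set_n_lists)

lemma sum_list_divide_const: "sum_list (map (\<lambda>p. f p / (c::real)) xs) = sum_list (map f xs) / c"
  by (induction xs) (auto simp: add_divide_distrib)

lemma sp_list:
  fixes f g :: "'a \<Rightarrow> real"
  shows "(vec_of_list (map f xs) - vec_of_list (map g xs)) \<bullet> (vec_of_list (map f xs) - vec_of_list (map g xs))
   = sum_list (map (\<lambda>p. (f p - g p)^2) xs)"
proof -
  have "(vec_of_list (map f xs) - vec_of_list (map g xs)) \<bullet> (vec_of_list (map f xs) - vec_of_list (map g xs))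
      = (\<Sum>i=0..<length xs. (f (xs ! i) - g (xs ! i))^2)"
    by (auto simp: scalar_prod_def vec_of_list_index power2_eq_square intro!: sum.cong)
  also have "\<dots> = sum_list (map (\<lambda>p. (f p - g p)^2) xs)"
    by (simp add: sum_list_sum_nth)
  finally show ?thesis .
qed

lemma phi_diff_sq:
  assumes u: "u \<in> carrier_vec g" and v: "v \<in> carrier_vec g" and g: "g > 0"
    and a: "a \<in> carrier_vec g" and b: "b \<in> carrier_vec g"
  shows "((\<Sum>k<dim_vec u. a $ k) / real (dim_vec u) - (\<Sum>k<dim_vec v. b $ k) / real (dim_vec v))\<^sup>2
     \<le> ((a - b) \<bullet> (a - b)) / real g"
proof -
  have "(\<Sum>k<dim_vec u. a $ k) / real (dim_vec u) - (\<Sum>k<dim_vec v. b $ k) / real (dim_vec v)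
      = (\<Sum>k<g. a $ k - b $ k) / real g" using u v by (simp add: sum_subtractf diff_divide_distrib)
  hence "((\<Sum>k<dim_vec u. a $ k) / real (dim_vec u) - (\<Sum>k<dim_vec v. b $ k) / real (dim_vec v))\<^sup>2
      = (\<Sum>k<g. a $ k - b $ k)\<^sup>2 / (real g)\<^sup>2" by (simp add: power_divide)
  also have "\<dots> \<le> ((\<Sum>k<g. (a $ k - b $ k)\<^sup>2) * real g) / (real g)\<^sup>2"
    using sum_squared_le_sum_of_squares[of "\<lambda>k. a $ k - b $ k" "{..<g}"]
    by (intro divide_right_mono) auto
  also have "\<dots> = (\<Sum>k<g. (a $ k - b $ k)\<^sup>2) / real g" using g by (simp add: power2_eq_square)
  also have "(\<Sum>k<g. (a $ k - b $ k)\<^sup>2) = (a - b) \<bullet> (a - b)"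
    using a b by (auto simp: scalar_prod_def power2_eq_square lessThan_atLeast0 intro!: sum.cong)
  finally show ?thesis .
qed

lemma gst_diff_sq:
  fixes B :: real
  assumes Wc: "\<And>j. j \<in> {1..J} \<Longrightarrow> wavelet h j S \<in> carrier_mat g g"
    and Fr: "\<And>v. v \<in> carrier_vec g \<Longrightarrow> (\<Sum>j=1..J. (vnorm (wavelet h j S *\<^sub>v v))\<^sup>2) \<le> B\<^sup>2 * (vnorm v)\<^sup>2"
    and u: "u \<in> carrier_vec g" and v: "v \<in> carrier_vec g" and g: "g > 0"
  shows "(gst h J L S u - gst h J L S v) \<bullet> (gst h J L S u - gst h J L S v)
     \<le> (\<Sum>k<L. B ^ (2 * k)) * ((u - v) \<bullet> (u - v)) / real g"
proof -
  let ?sq = "\<lambda>w::real vec. w \<bullet> w"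
  let ?P = "\<lambda>x p. Phi_path h S x p"
  have "?sq (gst h J L S u - gst h J L S v) = sum_list (map (\<lambda>p. (phi_path h S u p - phi_path h S v p)^2) (gst_paths J L))"
    unfolding gst_def by (rule sp_list)
  also have "\<dots> = sum_list (map (\<lambda>l. sum_list (map (\<lambda>p. (phi_path h S u p - phi_path h S v p)^2) (List.n_lists l [1..<Suc J]))) [0..<L])"
    unfolding gst_paths_def by (simp add: sum_list_concat_map o_def)
  also have "\<dots> \<le> sum_list (map (\<lambda>l. B ^ (2 * l) * ?sq (u - v) / real g) [0..<L])"
  proof (rule sum_list_mono)
    fix l assume "l \<in> set [0..<L]"
    have "sum_list (map (\<lambda>p. (phi_path h S u p - phi_path h S v p)^2) (List.n_lists l [1..<Suc J]))
       \<le> sum_list (map (\<lambda>p. ?sq (?P u p - ?P v p) / real g) (List.n_lists l [1..<Suc J]))"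
    proof (rule sum_list_mono)
      fix p assume "p \<in> set (List.n_lists l [1..<Suc J])"
      hence p: "set p \<subseteq> {1..J}" by (auto simp: set_n_lists)
      show "(phi_path h S u p - phi_path h S v p)^2 \<le> ?sq (?P u p - ?P v p) / real g"
        unfolding phi_path_def
        by (rule phi_diff_sq[OF u v g Phi_carrier[OF Wc p u] Phi_carrier[OF Wc p v]]) auto
    qed
    also have "\<dots> = sum_list (map (\<lambda>p. ?sq (?P u p - ?P v p)) (List.n_lists l [1..<Suc J])) / real g"
      by (simp add: sum_list_divide_const)
    also have "\<dots> \<le> B ^ (2 * l) * ?sq (u - v) / real g"
      by (rule divide_right_mono[OF Phi_diff[OF Wc Fr u v]]) auto
    finally show "sum_list (map (\<lambda>p. (phi_path h S u p - phi_path h S v p)^2) (List.n_lists l [1..<Suc J]))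
       \<le> B ^ (2 * l) * ?sq (u - v) / real g" .
  qed
  also have "\<dots> = (\<Sum>k<L. B ^ (2 * k)) * ?sq (u - v) / real g"
    by (simp add: sum_set_upt_conv_sum_list_nat[symmetric] lessThan_atLeast0 sum_divide_distrib[symmetric] sum_distrib_right)
  finally show ?thesis .
qed



lemma convex_tangent:
  fixes f f' :: "real \<Rightarrow> real"
  assumes cvx: "convex_on UNIV f" and d: "\<And>s. (f has_real_derivative f' s) (at s)"
  shows "f x + f' x * (y - x) \<le> f y"
proof (rule ccontr)
  assume "\<not> ?thesis"
  hence pos: "0 < f' x * (y - x) - (f y - f x)" by simp
  define g where "g t = f (x + t * (y - x)) - (1 - t) * f x - t * f y" for t
  have "(g has_real_derivative (f' x * (y - x) - (f y - f x))) (at 0)"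
  proof -
    have "((\<lambda>t. f (x + t * (y - x))) has_real_derivative f' (x + 0 * (y - x)) * (0 + 1 * (y - x))) (at 0)"
      by (rule DERIV_chain2[OF d]) (auto intro!: derivative_eq_intros)
    hence "((\<lambda>t. f (x + t * (y - x))) has_real_derivative f' x * (y - x)) (at 0)" by simp
    thus ?thesis unfolding g_def
      by (auto intro!: derivative_eq_intros)
  qed
  from DERIV_pos_inc_right[OF this pos] obtain dd where dd: "dd > 0" "\<forall>h>0. h < dd \<longrightarrow> g 0 < g (0 + h)" by blast
  define h where "h = min (dd/2) (1/2)"
  have h: "h > 0" "h < dd" "h \<le> 1" using dd by (auto simp: h_def)
  have "g 0 = 0" by (simp add: g_def)
  moreover have "g h \<le> 0"
  proof -
    have "f ((1 - h) *\<^sub>R x + h *\<^sub>R y) \<le> (1 - h) * f x + h * f y"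
      using convex_onD[OF cvx, of h x y] h by auto
    moreover have "(1 - h) *\<^sub>R x + h *\<^sub>R y = x + h * (y - x)" by (simp add: algebra_simps)
    ultimately show ?thesis by (simp add: g_def)
  qed
  ultimately show False using dd(2) h by force
qed

lemma convex_deriv_mono:
  fixes f f' :: "real \<Rightarrow> real"
  assumes cvx: "convex_on UNIV f" and d: "\<And>s. (f has_real_derivative f' s) (at s)"
    and xy: "x \<le> y"
  shows "f' x \<le> f' y"
proof -
  have 1: "f x + f' x * (y - x) \<le> f y" by (rule convex_tangent[OF cvx d])
  have 2: "f y + f' y * (x - y) \<le> f x" by (rule convex_tangent[OF cvx d])
  have "(f' y - f' x) * (y - x) \<ge> 0" using 1 2 by (simp add: algebra_simps)
  thus ?thesis using xy
    by (cases "x = y") (auto simp: zero_le_mult_iff)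
qed

lemma convex_second_deriv_nonneg:
  fixes f f' f'' :: "real \<Rightarrow> real"
  assumes cvx: "convex_on UNIV f" and d: "\<And>s. (f has_real_derivative f' s) (at s)"
    and d2: "\<And>s. (f' has_real_derivative f'' s) (at s)"
  shows "f'' x \<ge> 0"
proof (rule ccontr)
  assume "\<not> ?thesis"
  hence "f'' x < 0" by simp
  from DERIV_neg_dec_right[OF d2 this] obtain dd where "dd > 0" "\<forall>h>0. h < dd \<longrightarrow> f' x > f' (x + h)" by blast
  hence "f' x > f' (x + dd/2)" by auto
  moreover have "f' x \<le> f' (x + dd/2)" using convex_deriv_mono[OF cvx d] \<open>dd > 0\<close> by simp
  ultimately show False by simp
qed

lemma remainder_bound:
  fixes f f' :: "real \<Rightarrow> real"
  assumes d: "\<And>s. (f has_real_derivative f' s) (at s)"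
    and lip: "\<And>s t. \<bar>f' s - f' t\<bar> \<le> \<gamma> * \<bar>s - t\<bar>"
  shows "\<bar>f b - f a - f' a * (b - a)\<bar> \<le> \<gamma> * (b - a)\<^sup>2"
proof -
  have g0: "\<gamma> \<ge> 0" using lip[of 1 0] by simp
  have "\<exists>z. f b - f a = (b - a) * f' z \<and> \<bar>z - a\<bar> \<le> \<bar>b - a\<bar>"
  proof (cases a b rule: linorder_cases)
    case less
    then obtain z where z: "a < z" "z < b" "f b - f a = (b - a) * f' z"
      using MVT2[OF less, of f f'] d by blast
    thus ?thesis by (intro exI[of _ z]) auto
  next
    case equal thus ?thesis by auto
  next
    case greater
    then obtain z where z: "b < z" "z < a" "f a - f b = (a - b) * f' z"
      using MVT2[OF greater, of f f'] d by blast
    hence "f b - f a = (b - a) * f' z" by (simp add: algebra_simps)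
    thus ?thesis using z by (intro exI[of _ z]) auto
  qed
  then obtain z where z: "f b - f a = (b - a) * f' z" "\<bar>z - a\<bar> \<le> \<bar>b - a\<bar>" by blast
  have "f b - f a - f' a * (b - a) = (f' z - f' a) * (b - a)" using z by (simp add: algebra_simps)
  hence "\<bar>f b - f a - f' a * (b - a)\<bar> = \<bar>f' z - f' a\<bar> * \<bar>b - a\<bar>" by (simp add: abs_mult)
  also have "\<dots> \<le> \<gamma> * \<bar>z - a\<bar> * \<bar>b - a\<bar>" using lip[of z a] by (intro mult_right_mono) auto
  also have "\<dots> \<le> \<gamma> * \<bar>b - a\<bar> * \<bar>b - a\<bar>"
    using z g0 by (intro mult_right_mono mult_left_mono) auto
  finally show ?thesis by (simp add: power2_eq_square mult.assoc abs_mult_self_eq)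
qed



lemma vnorm_L2: "vnorm v = L2_set (\<lambda>i. v $ i) {..<dim_vec v}"
  unfolding vnorm_def L2_set_def scalar_prod_def
  by (simp add: lessThan_atLeast0 power2_eq_square)

lemma vnorm_nonneg: "vnorm v \<ge> 0"
  unfolding vnorm_L2 by simp

lemma vnorm_cs:
  fixes a b :: "real vec"
  assumes "dim_vec a = dim_vec b"
  shows "\<bar>a \<bullet> b\<bar> \<le> vnorm a * vnorm b"
proof -
  have "\<bar>a \<bullet> b\<bar> = \<bar>\<Sum>i<dim_vec b. a $ i * b $ i\<bar>" by (simp add: scalar_prod_def lessThan_atLeast0)
  also have "\<dots> \<le> (\<Sum>i<dim_vec b. \<bar>a $ i * b $ i\<bar>)" by (rule sum_abs)
  also have "\<dots> = (\<Sum>i<dim_vec b. \<bar>a $ i\<bar> * \<bar>b $ i\<bar>)" by (simp add: abs_mult)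
  also have "\<dots> \<le> L2_set (\<lambda>i. a $ i) {..<dim_vec b} * L2_set (\<lambda>i. b $ i) {..<dim_vec b}"
    by (rule L2_set_mult_ineq)
  finally show ?thesis using assms by (simp add: vnorm_L2)
qed

lemma vnorm_add:
  fixes a b :: "real vec"
  assumes "dim_vec a = dim_vec b"
  shows "vnorm (a + b) \<le> vnorm a + vnorm b"
proof -
  have "vnorm (a + b) = L2_set (\<lambda>i. a $ i + b $ i) {..<dim_vec b}"
    unfolding vnorm_L2 using assms by (auto intro!: L2_set_cong)
  also have "\<dots> \<le> L2_set (\<lambda>i. a $ i) {..<dim_vec b} + L2_set (\<lambda>i. b $ i) {..<dim_vec b}"
    by (rule L2_set_triangle_ineq)
  finally show ?thesis using assms by (simp add: vnorm_L2)
qed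

lemma vnorm_diff:
  fixes a b :: "real vec"
  assumes "dim_vec a = dim_vec b"
  shows "vnorm (a - b) \<le> vnorm a + vnorm b"
proof -
  have "vnorm (a - b) = L2_set (\<lambda>i. a $ i + (- b $ i)) {..<dim_vec b}"
    unfolding vnorm_L2 using assms by (auto intro!: L2_set_cong)
  also have "\<dots> \<le> L2_set (\<lambda>i. a $ i) {..<dim_vec b} + L2_set (\<lambda>i. - b $ i) {..<dim_vec b}"
    by (rule L2_set_triangle_ineq)
  also have "L2_set (\<lambda>i. - b $ i) {..<dim_vec b} = L2_set (\<lambda>i. b $ i) {..<dim_vec b}"
    unfolding L2_set_def by simp
  finally show ?thesis using assms by (simp add: vnorm_L2)
qed

lemma vnorm_smult: "vnorm (c \<cdot>\<^sub>v (a :: real vec)) = \<bar>c\<bar> * vnorm a"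
proof -
  have "vnorm (c \<cdot>\<^sub>v a) = L2_set (\<lambda>i. \<bar>c\<bar> * a $ i) {..<dim_vec a}"
    unfolding vnorm_L2 L2_set_def by (auto simp: power_mult_distrib intro!: sum.cong)
  also have "\<dots> = \<bar>c\<bar> * vnorm a" unfolding vnorm_L2 by (simp add: L2_set_right_distrib)
  finally show ?thesis .
qed

lemma L2_sum_ineq:
  assumes "finite I"
  shows "L2_set (\<lambda>k. \<Sum>i\<in>I. f i k) A \<le> (\<Sum>i\<in>I. L2_set (f i) A)"
  using assms
proof (induction I rule: finite_induct)
  case empty thus ?case by (simp add: L2_set_def)
next
  case (insert x F)
  have "L2_set (\<lambda>k. \<Sum>i\<in>insert x F. f i k) A = L2_set (\<lambda>k. f x k + (\<Sum>i\<in>F. f i k)) A"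
    using insert by simp
  also have "\<dots> \<le> L2_set (f x) A + L2_set (\<lambda>k. \<Sum>i\<in>F. f i k) A" by (rule L2_set_triangle_ineq)
  also have "\<dots> \<le> L2_set (f x) A + (\<Sum>i\<in>F. L2_set (f i) A)" using insert by simp
  finally show ?case using insert by simp
qed

lemma vnorm_lincomb:
  fixes z :: "nat \<Rightarrow> real vec"
  assumes "finite I" and z: "\<And>i. i \<in> I \<Longrightarrow> z i \<in> carrier_vec d"
  shows "vnorm (vec d (\<lambda>k. \<Sum>i\<in>I. c i * z i $ k)) \<le> (\<Sum>i\<in>I. \<bar>c i\<bar> * vnorm (z i))"
proof -
  have "vnorm (vec d (\<lambda>k. \<Sum>i\<in>I. c i * z i $ k)) = L2_set (\<lambda>k. \<Sum>i\<in>I. c i * z i $ k) {..<d}"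
    unfolding vnorm_L2 by (auto intro!: L2_set_cong)
  also have "\<dots> \<le> (\<Sum>i\<in>I. L2_set (\<lambda>k. c i * z i $ k) {..<d})" by (rule L2_sum_ineq[OF assms(1)])
  also have "\<dots> = (\<Sum>i\<in>I. \<bar>c i\<bar> * vnorm (z i))"
  proof (rule sum.cong)
    fix i assume i: "i \<in> I"
    have "L2_set (\<lambda>k. c i * z i $ k) {..<d} = L2_set (\<lambda>k. \<bar>c i\<bar> * z i $ k) {..<d}"
      unfolding L2_set_def by (simp add: power_mult_distrib)
    also have "\<dots> = \<bar>c i\<bar> * vnorm (z i)" using z[OF i] unfolding vnorm_L2 by (simp add: L2_set_right_distrib)
    finally show "L2_set (\<lambda>k. c i * z i $ k) {..<d} = \<bar>c i\<bar> * vnorm (z i)" .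
  qed simp
  finally show ?thesis .
qed

lemma vnorm_le_sqrt: "(v::real vec) \<bullet> v \<le> r \<Longrightarrow> vnorm v \<le> sqrt r"
  unfolding vnorm_def by simp



lemma grad_zero:
  fixes Z :: "nat \<Rightarrow> real vec" and l l' :: "real \<Rightarrow> 'y \<Rightarrow> real"
  assumes Zc: "\<And>i. i < n \<Longrightarrow> Z i \<in> carrier_vec d"
    and l_deriv: "\<And>s c. ((\<lambda>t. l t c) has_real_derivative l' s c) (at s)"
    and w: "w \<in> carrier_vec d"
    and wmin: "\<And>v. v \<in> carrier_vec d \<Longrightarrow> lossL l lam n Z y w \<le> lossL l lam n Z y v"
  shows "gradL l' lam n Z y w = 0\<^sub>v d"
proof (rule eq_vecI)
  show dims: "dim_vec (gradL l' lam n Z y w) = dim_vec (0\<^sub>v d)" using w by (simp add: gradL_def)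
  fix k assume "k < dim_vec (0\<^sub>v d)"
  hence k: "k < d" by simp
  define e :: "real vec" where "e = unit_vec d k"
  have e: "e \<in> carrier_vec d" by (simp add: e_def)
  define \<phi> where "\<phi> t = lossL l lam n Z y (w + t \<cdot>\<^sub>v e)" for t
  have ew: "e \<bullet> w = w $ k" using w k by (simp add: e_def)
  have we: "w \<bullet> e = w $ k" using ew comm_scalar_prod[OF w e] by simp
  have ee: "e \<bullet> e = 1" using k by (simp add: e_def)
  have \<phi>eq: "\<phi> t = (\<Sum>i<n. l (w \<bullet> Z i + t * Z i $ k) (y i) + lam / 2 * (w \<bullet> w + 2 * t * w $ k + t\<^sup>2))" for t
  proof -
    have "(w + t \<cdot>\<^sub>v e) \<bullet> Z i = w \<bullet> Z i + t * Z i $ k" if i: "i < n" for i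
      using Zc[OF i] w e k
      by (simp add: add_scalar_prod_distrib[of _ d] e_def)
    moreover have "(vnorm (w + t \<cdot>\<^sub>v e))\<^sup>2 = w \<bullet> w + 2 * t * w $ k + t\<^sup>2"
    proof -
      have "(vnorm (w + t \<cdot>\<^sub>v e))\<^sup>2 = (w + t \<cdot>\<^sub>v e) \<bullet> (w + t \<cdot>\<^sub>v e)" by (rule vnorm_sq)
      also have "\<dots> = w \<bullet> w + t * (w \<bullet> e) + t * (e \<bullet> w) + t * t * (e \<bullet> e)"
        using w e by (simp add: add_scalar_prod_distrib[of _ d] scalar_prod_add_distrib[of _ d] algebra_simps)
      finally show ?thesis using ew we ee by (simp add: power2_eq_square)
    qed
    ultimately show ?thesis unfolding \<phi>_def lossL_def by (auto intro!: sum.cong)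
  qed
  define D where "D = (\<Sum>i<n. l' (w \<bullet> Z i) (y i) * Z i $ k + lam * w $ k)"
  have der: "(\<phi> has_real_derivative D) (at 0)"
  proof -
    have "((\<lambda>t. \<Sum>i<n. l (w \<bullet> Z i + t * Z i $ k) (y i) + lam / 2 * (w \<bullet> w + 2 * t * w $ k + t\<^sup>2))
        has_real_derivative (\<Sum>i<n. l' (w \<bullet> Z i + 0 * Z i $ k) (y i) * (0 + 1 * Z i $ k) + lam / 2 * (0 + 2 * 1 * w $ k + 2 * 0))) (at 0)"
    proof (rule DERIV_sum)
      fix i assume "i \<in> {..<n}"
      have 1: "((\<lambda>t. l (w \<bullet> Z i + t * Z i $ k) (y i)) has_real_derivative l' (w \<bullet> Z i + 0 * Z i $ k) (y i) * (0 + 1 * Z i $ k)) (at 0)"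
        by (rule DERIV_chain2[OF l_deriv]) (auto intro!: derivative_eq_intros)
      have 2: "((\<lambda>t. lam / 2 * (w \<bullet> w + 2 * t * w $ k + t\<^sup>2)) has_real_derivative lam / 2 * (0 + 2 * 1 * w $ k + 2 * 0)) (at 0)"
        by (auto intro!: derivative_eq_intros)
      show "((\<lambda>t. l (w \<bullet> Z i + t * Z i $ k) (y i) + lam / 2 * (w \<bullet> w + 2 * t * w $ k + t\<^sup>2))
        has_real_derivative l' (w \<bullet> Z i + 0 * Z i $ k) (y i) * (0 + 1 * Z i $ k) + lam / 2 * (0 + 2 * 1 * w $ k + 2 * 0)) (at 0)"
        by (rule DERIV_add[OF 1 2])
    qed
    moreover have "(\<lambda>t. \<Sum>i<n. l (w \<bullet> Z i + t * Z i $ k) (y i) + lam / 2 * (w \<bullet> w + 2 * t * w $ k + t\<^sup>2)) = \<phi>"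
      using \<phi>eq by auto
    moreover have "(\<Sum>i<n. l' (w \<bullet> Z i + 0 * Z i $ k) (y i) * (0 + 1 * Z i $ k) + lam / 2 * (0 + 2 * 1 * w $ k + 2 * 0)) = D"
      unfolding D_def by simp
    ultimately show ?thesis by simp
  qed
  have "D = 0"
  proof (rule DERIV_local_min[OF der, of 1])
    show "\<forall>t. \<bar>0 - t\<bar> < 1 \<longrightarrow> \<phi> 0 \<le> \<phi> t"
    proof (intro allI impI)
      fix t :: real
      have "w + 0 \<cdot>\<^sub>v e = w" using w e by auto
      hence "\<phi> 0 = lossL l lam n Z y w" by (simp add: \<phi>_def)
      also have "\<dots> \<le> \<phi> t" unfolding \<phi>_def by (rule wmin) (use w e in auto)
      finally show "\<phi> 0 \<le> \<phi> t" .
    qed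
  qed simp
  moreover have "gradL l' lam n Z y w $ k = D" using k w by (simp add: gradL_def D_def)
  ultimately show "gradL l' lam n Z y w $ k = 0\<^sub>v d $ k" using k by simp
qed



lemma gradL_idx:
  assumes k: "k < dim_vec w"
  shows "gradL l' lam n Z y w $ k = (\<Sum>i<n. l' (w \<bullet> Z i) (y i) * Z i $ k) + real n * lam * w $ k"
  using k by (simp add: gradL_def sum.distrib)

lemma w_bound:
  fixes Z :: "nat \<Rightarrow> real vec"
  assumes Zc: "\<And>i. i < n \<Longrightarrow> Z i \<in> carrier_vec d" and n: "n \<ge> 1" and lam: "lam > 0"
    and w: "w \<in> carrier_vec d" and grad: "gradL l' lam n Z y w = 0\<^sub>v d"
    and C: "\<And>i. i < n \<Longrightarrow> vnorm (l' (w \<bullet> Z i) (y i) \<cdot>\<^sub>v Z i) \<le> C1"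
  shows "vnorm w \<le> C1 / lam"
proof -
  define c where "c i = l' (w \<bullet> Z i) (y i)" for i
  have eq: "(\<Sum>i<n. c i * Z i $ k) = - (real n * lam * w $ k)" if k: "k < d" for k
  proof -
    have "gradL l' lam n Z y w $ k = 0" using grad k by simp
    moreover have "gradL l' lam n Z y w $ k = (\<Sum>i<n. c i * Z i $ k) + real n * lam * w $ k"
      unfolding c_def by (rule gradL_idx) (use w k in simp)
    ultimately show ?thesis by linarith
  qed
  have "real n * lam * (w \<bullet> w) = (\<Sum>k<d. w $ k * (real n * lam * w $ k))"
    using w by (simp add: scalar_prod_def lessThan_atLeast0 sum_distrib_left mult_ac)
  also have "\<dots> = - (\<Sum>k<d. \<Sum>i<n. w $ k * (c i * Z i $ k))"
  proof -
    have "(\<Sum>k<d. w $ k * (real n * lam * w $ k)) = (\<Sum>k<d. - (\<Sum>i<n. w $ k * (c i * Z i $ k)))"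
      by (rule sum.cong) (simp_all add: eq sum_distrib_left[symmetric])
    thus ?thesis by (simp add: sum_negf)
  qed
  also have "\<dots> = - (\<Sum>i<n. w \<bullet> (c i \<cdot>\<^sub>v Z i))"
  proof -
    have "(\<Sum>k<d. \<Sum>i<n. w $ k * (c i * Z i $ k)) = (\<Sum>i<n. \<Sum>k<d. w $ k * (c i * Z i $ k))"
      by (rule sum.swap)
    also have "\<dots> = (\<Sum>i<n. w \<bullet> (c i \<cdot>\<^sub>v Z i))"
    proof (rule sum.cong[OF refl])
      fix i assume "i \<in> {..<n}"
      hence "Z i \<in> carrier_vec d" using Zc by simp
      thus "(\<Sum>k<d. w $ k * (c i * Z i $ k)) = w \<bullet> (c i \<cdot>\<^sub>v Z i)"
        by (auto simp: scalar_prod_def lessThan_atLeast0 intro!: sum.cong)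
    qed
    finally show ?thesis by simp
  qed
  also have "\<dots> \<le> (\<Sum>i<n. vnorm w * C1)"
  proof -
    have "- (\<Sum>i<n. w \<bullet> (c i \<cdot>\<^sub>v Z i)) \<le> \<bar>\<Sum>i<n. w \<bullet> (c i \<cdot>\<^sub>v Z i)\<bar>" by (rule abs_ge_minus_self)
    also have "\<dots> \<le> (\<Sum>i<n. \<bar>w \<bullet> (c i \<cdot>\<^sub>v Z i)\<bar>)" by (rule sum_abs)
    also have "\<dots> \<le> (\<Sum>i<n. vnorm w * C1)"
    proof (rule sum_mono)
      fix i assume i: "i \<in> {..<n}"
      have "\<bar>w \<bullet> (c i \<cdot>\<^sub>v Z i)\<bar> \<le> vnorm w * vnorm (c i \<cdot>\<^sub>v Z i)"
        using Zc[of i] w i by (intro vnorm_cs) auto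
      also have "\<dots> \<le> vnorm w * C1" using C[of i] i unfolding c_def
        by (intro mult_left_mono vnorm_nonneg) auto
      finally show "\<bar>w \<bullet> (c i \<cdot>\<^sub>v Z i)\<bar> \<le> vnorm w * C1" .
    qed
    finally show ?thesis .
  qed
  also have "\<dots> = real n * (vnorm w * C1)" by simp
  finally have ineq: "real n * lam * (w \<bullet> w) \<le> real n * (vnorm w * C1)" .
  have C1: "C1 \<ge> 0" using C[of 0] n vnorm_nonneg[of "l' (w \<bullet> Z 0) (y 0) \<cdot>\<^sub>v Z 0"] by simp
  have ww: "w \<bullet> w = vnorm w * vnorm w" using vnorm_sq[of w] by (simp add: power2_eq_square)
  have "lam * (vnorm w * vnorm w) \<le> vnorm w * C1" using ineq n ww by simp
  show ?thesis
  proof (cases "vnorm w = 0")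
    case True thus ?thesis using C1 lam by simp
  next
    case False
    hence "vnorm w > 0" using vnorm_nonneg[of w] by simp
    moreover have "vnorm w * (lam * vnorm w) \<le> vnorm w * C1"
      using \<open>lam * (vnorm w * vnorm w) \<le> vnorm w * C1\<close> by (simp add: mult_ac)
    ultimately have "lam * vnorm w \<le> C1" by (simp add: mult_le_cancel_left_pos)
    thus ?thesis using lam by (simp add: field_simps)
  qed
qed



lemma hess_carrier: "hessL l'' lam n Z y w \<in> carrier_mat (dim_vec w) (dim_vec w)"
  by (simp add: hessL_def)

lemma sp_vec2: "dim_vec v = d \<Longrightarrow> v \<bullet> vec d f = (\<Sum>i<d. v $ i * f i)"
  unfolding scalar_prod_def by (simp add: lessThan_atLeast0)

lemma hess_mv:
  fixes Z :: "nat \<Rightarrow> real vec"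
  assumes Zc: "\<And>i. i < n \<Longrightarrow> Z i \<in> carrier_vec d" and w: "w \<in> carrier_vec d" and v: "v \<in> carrier_vec d"
  shows "hessL l'' lam n Z y w *\<^sub>v v
     = vec d (\<lambda>k. (\<Sum>i<n. l'' (w \<bullet> Z i) (y i) * (Z i \<bullet> v) * Z i $ k) + real n * lam * v $ k)"
proof (rule eq_vecI)
  fix k assume "k < dim_vec (vec d (\<lambda>k. (\<Sum>i<n. l'' (w \<bullet> Z i) (y i) * (Z i \<bullet> v) * Z i $ k) + real n * lam * v $ k))"
  hence k: "k < d" by simp
  define c where "c i = l'' (w \<bullet> Z i) (y i)" for i
  have H: "hessL l'' lam n Z y w \<in> carrier_mat d d" using hess_carrier[of l'' lam n Z y w] w by simp
  have "(hessL l'' lam n Z y w *\<^sub>v v) $ k = (\<Sum>m<d. hessL l'' lam n Z y w $$ (k,m) * v $ m)"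
    by (rule mv_idx[OF H]) (use v k in auto)
  also have "\<dots> = (\<Sum>m<d. (\<Sum>i<n. c i * Z i $ k * Z i $ m * v $ m) + real n * (if k = m then lam else 0) * v $ m)"
  proof (rule sum.cong[OF refl])
    fix m assume "m \<in> {..<d}"
    hence m: "m < d" by simp
    have "hessL l'' lam n Z y w $$ (k,m) = (\<Sum>i<n. c i * Z i $ k * Z i $ m) + real n * (if k = m then lam else 0)"
      using k m w by (simp add: hessL_def c_def sum.distrib)
    thus "hessL l'' lam n Z y w $$ (k,m) * v $ m = (\<Sum>i<n. c i * Z i $ k * Z i $ m * v $ m) + real n * (if k = m then lam else 0) * v $ m"
      by (simp add: distrib_right sum_distrib_right)
  qed
  also have "\<dots> = (\<Sum>m<d. \<Sum>i<n. c i * Z i $ k * Z i $ m * v $ m) + real n * lam * v $ k"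
  proof -
    have "(\<Sum>m<d. real n * (if k = m then lam else 0) * v $ m) = (\<Sum>m<d. if m = k then real n * lam * v $ k else 0)"
      by (rule sum.cong) auto
    also have "\<dots> = real n * lam * v $ k" using k by simp
    finally show ?thesis by (simp add: sum.distrib)
  qed
  also have "(\<Sum>m<d. \<Sum>i<n. c i * Z i $ k * Z i $ m * v $ m) = (\<Sum>i<n. \<Sum>m<d. c i * Z i $ k * Z i $ m * v $ m)"
    by (rule sum.swap)
  also have "\<dots> = (\<Sum>i<n. c i * (Z i \<bullet> v) * Z i $ k)"
  proof (rule sum.cong[OF refl])
    fix i assume "i \<in> {..<n}"
    have "(\<Sum>m<d. c i * Z i $ k * Z i $ m * v $ m) = c i * Z i $ k * (\<Sum>m<d. Z i $ m * v $ m)"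
      by (simp add: sum_distrib_left mult_ac)
    also have "(\<Sum>m<d. Z i $ m * v $ m) = Z i \<bullet> v" using v by (simp add: scalar_prod_def lessThan_atLeast0)
    finally show "(\<Sum>m<d. c i * Z i $ k * Z i $ m * v $ m) = c i * (Z i \<bullet> v) * Z i $ k" by (simp add: mult_ac)
  qed
  finally show "(hessL l'' lam n Z y w *\<^sub>v v) $ k = vec d (\<lambda>k. (\<Sum>i<n. l'' (w \<bullet> Z i) (y i) * (Z i \<bullet> v) * Z i $ k) + real n * lam * v $ k) $ k"
    using k by (simp add: c_def)
qed (use w in \<open>simp add: hessL_def\<close>)

lemma hess_quad:
  fixes Z :: "nat \<Rightarrow> real vec"
  assumes Zc: "\<And>i. i < n \<Longrightarrow> Z i \<in> carrier_vec d" and w: "w \<in> carrier_vec d" and v: "v \<in> carrier_vec d"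
  shows "v \<bullet> (hessL l'' lam n Z y w *\<^sub>v v) = (\<Sum>i<n. l'' (w \<bullet> Z i) (y i) * (Z i \<bullet> v)\<^sup>2) + real n * lam * (v \<bullet> v)"
proof -
  define c where "c i = l'' (w \<bullet> Z i) (y i)" for i
  have "v \<bullet> (hessL l'' lam n Z y w *\<^sub>v v) = (\<Sum>k<d. v $ k * ((\<Sum>i<n. c i * (Z i \<bullet> v) * Z i $ k) + real n * lam * v $ k))"
  proof -
    have eq: "hessL l'' lam n Z y w *\<^sub>v v = vec d (\<lambda>k. (\<Sum>i<n. l'' (w \<bullet> Z i) (y i) * (Z i \<bullet> v) * Z i $ k) + real n * lam * v $ k)"
      by (rule hess_mv) (use Zc w v in auto)
    show ?thesis unfolding eq c_def using v by (subst sp_vec2) auto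
  qed
  also have "\<dots> = (\<Sum>k<d. \<Sum>i<n. c i * (Z i \<bullet> v) * (v $ k * Z i $ k)) + real n * lam * (\<Sum>k<d. v $ k * v $ k)"
    by (simp add: distrib_left sum.distrib sum_distrib_left mult_ac)
  also have "(\<Sum>k<d. \<Sum>i<n. c i * (Z i \<bullet> v) * (v $ k * Z i $ k)) = (\<Sum>i<n. \<Sum>k<d. c i * (Z i \<bullet> v) * (v $ k * Z i $ k))"
    by (rule sum.swap)
  also have "\<dots> = (\<Sum>i<n. c i * (Z i \<bullet> v)\<^sup>2)"
  proof (rule sum.cong[OF refl])
    fix i assume i: "i \<in> {..<n}"
    have "(\<Sum>k<d. c i * (Z i \<bullet> v) * (v $ k * Z i $ k)) = c i * (Z i \<bullet> v) * (\<Sum>k<d. v $ k * Z i $ k)"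
      by (simp add: sum_distrib_left)
    also have "(\<Sum>k<d. v $ k * Z i $ k) = Z i \<bullet> v"
      using Zc[of i] i v by (simp add: scalar_prod_def lessThan_atLeast0 mult.commute)
    finally show "(\<Sum>k<d. c i * (Z i \<bullet> v) * (v $ k * Z i $ k)) = c i * (Z i \<bullet> v)\<^sup>2"
      by (simp add: power2_eq_square mult_ac)
  qed
  also have "(\<Sum>k<d. v $ k * v $ k) = v \<bullet> v" using v by (simp add: scalar_prod_def lessThan_atLeast0)
  finally show ?thesis by (simp add: c_def)
qed

lemma hess_pd:
  fixes Z :: "nat \<Rightarrow> real vec"
  assumes Zc: "\<And>i. i < n \<Longrightarrow> Z i \<in> carrier_vec d" and w: "w \<in> carrier_vec d" and v: "v \<in> carrier_vec d"
    and c: "\<And>i. i < n \<Longrightarrow> l'' (w \<bullet> Z i) (y i) \<ge> 0"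
  shows "v \<bullet> (hessL l'' lam n Z y w *\<^sub>v v) \<ge> real n * lam * (v \<bullet> v)"
proof -
  have "(\<Sum>i<n. l'' (w \<bullet> Z i) (y i) * (Z i \<bullet> v)\<^sup>2) \<ge> 0" using c by (intro sum_nonneg) auto
  moreover have "v \<bullet> (hessL l'' lam n Z y w *\<^sub>v v) = (\<Sum>i<n. l'' (w \<bullet> Z i) (y i) * (Z i \<bullet> v)\<^sup>2) + real n * lam * (v \<bullet> v)"
    by (rule hess_quad[OF Zc w v])
  ultimately show ?thesis by linarith
qed

lemma vec_sq_pos: "(v :: real vec) \<in> carrier_vec d \<Longrightarrow> v \<noteq> 0\<^sub>v d \<Longrightarrow> v \<bullet> v > 0"
  by (metis conj_real_vec conjugate_square_eq_0_vec order_less_le sq_nonneg_vec)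

lemma hess_inverse:
  fixes Z :: "nat \<Rightarrow> real vec"
  assumes Zc: "\<And>i. i < n \<Longrightarrow> Z i \<in> carrier_vec d" and w: "w \<in> carrier_vec d"
    and c: "\<And>i. i < n \<Longrightarrow> l'' (w \<bullet> Z i) (y i) \<ge> 0" and pos: "real n * lam > 0"
  shows "matinv (hessL l'' lam n Z y w) \<in> carrier_mat d d
    \<and> hessL l'' lam n Z y w * matinv (hessL l'' lam n Z y w) = 1\<^sub>m d"
proof -
  let ?H = "hessL l'' lam n Z y w"
  have H: "?H \<in> carrier_mat d d" using hess_carrier[of l'' lam n Z y w] w by simp
  have "det ?H \<noteq> 0"
  proof
    assume "det ?H = 0"
    then obtain v where v: "v \<in> carrier_vec d" "v \<noteq> 0\<^sub>v d" "?H *\<^sub>v v = 0\<^sub>v d"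
      using det_0_iff_vec_prod_zero_field[OF H] by blast
    have "v \<bullet> (?H *\<^sub>v v) = 0" using v by simp
    moreover have "v \<bullet> (?H *\<^sub>v v) \<ge> real n * lam * (v \<bullet> v)" by (rule hess_pd[where Z=Z and d=d]) (use Zc w v c in auto)
    moreover have "real n * lam * (v \<bullet> v) > 0" using vec_sq_pos[OF v(1,2)] pos by simp
    ultimately show False by simp
  qed
  from det_non_zero_imp_unit[OF H this, of "()"]
  have "?H \<in> Units (ring_mat TYPE(real) d ())" .
  then obtain B where B: "B \<in> carrier_mat d d" "B * ?H = 1\<^sub>m d" "?H * B = 1\<^sub>m d"
    unfolding Units_def ring_mat_def by auto
  have dH: "dim_row ?H = d" using H by simp
  have "\<exists>B. B \<in> carrier_mat (dim_row ?H) (dim_row ?H) \<and> B * ?H = 1\<^sub>m (dim_row ?H) \<and> ?H * B = 1\<^sub>m (dim_row ?H)"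
    using B dH by auto
  hence "matinv ?H \<in> carrier_mat (dim_row ?H) (dim_row ?H) \<and> matinv ?H * ?H = 1\<^sub>m (dim_row ?H) \<and> ?H * matinv ?H = 1\<^sub>m (dim_row ?H)"
    unfolding matinv_def by (rule someI_ex)
  thus ?thesis using dH by simp
qed

lemma newton_step_bound:
  fixes Z :: "nat \<Rightarrow> real vec"
  assumes Zc: "\<And>i. i < n \<Longrightarrow> Z i \<in> carrier_vec d" and w: "w \<in> carrier_vec d"
    and c: "\<And>i. i < n \<Longrightarrow> l'' (w \<bullet> Z i) (y i) \<ge> 0" and pos: "real n * lam > 0"
    and D: "D \<in> carrier_vec d"
  shows "hessL l'' lam n Z y w *\<^sub>v (matinv (hessL l'' lam n Z y w) *\<^sub>v D) = D"
    and "matinv (hessL l'' lam n Z y w) *\<^sub>v D \<in> carrier_vec d"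
    and "vnorm (matinv (hessL l'' lam n Z y w) *\<^sub>v D) \<le> vnorm D / (real n * lam)"
proof -
  let ?H = "hessL l'' lam n Z y w"
  let ?v = "matinv ?H *\<^sub>v D"
  have H: "?H \<in> carrier_mat d d" using hess_carrier[of l'' lam n Z y w] w by simp
  have inv: "matinv ?H \<in> carrier_mat d d" "?H * matinv ?H = 1\<^sub>m d" using hess_inverse[where n=n and Z=Z and d=d and w=w and l''=l'' and y=y and lam=lam] Zc w c pos by auto
  show v: "?v \<in> carrier_vec d" using inv D by simp
  have "(?H * matinv ?H) *\<^sub>v D = ?H *\<^sub>v ?v" by (rule assoc_mult_mat_vec[OF H inv(1) D])
  thus Hv: "?H *\<^sub>v ?v = D" using inv D by simp
  have "real n * lam * (?v \<bullet> ?v) \<le> ?v \<bullet> D" using hess_pd[where n=n and Z=Z and d=d and w=w and v="?v" and l''=l'' and y=y and lam=lam] Zc w v c Hv by auto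
  also have "\<dots> \<le> vnorm ?v * vnorm D"
  proof -
    have "\<bar>?v \<bullet> D\<bar> \<le> vnorm ?v * vnorm D" using v D inv by (intro vnorm_cs) auto
    thus ?thesis by linarith
  qed
  finally have ineq: "real n * lam * (vnorm ?v * vnorm ?v) \<le> vnorm ?v * vnorm D"
    using vnorm_sq[of ?v] by (simp add: power2_eq_square)
  show "vnorm ?v \<le> vnorm D / (real n * lam)"
  proof (cases "vnorm ?v = 0")
    case True thus ?thesis using pos vnorm_nonneg[of D] by simp
  next
    case False
    hence p: "vnorm ?v > 0" using vnorm_nonneg[of ?v] by simp
    have "vnorm ?v * (real n * lam * vnorm ?v) \<le> vnorm ?v * vnorm D" using ineq by (simp add: mult_ac)
    hence "real n * lam * vnorm ?v \<le> vnorm D" using p by (simp add: mult_le_cancel_left_pos)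
    thus ?thesis using pos by (simp add: field_simps)
  qed
qed



lemma Phi_zero:
  assumes Wc: "\<And>j. j \<in> {1..J} \<Longrightarrow> wavelet h j S \<in> carrier_mat g g"
  shows "set p \<subseteq> {1..J} \<Longrightarrow> Phi_path h S (0\<^sub>v g) p = 0\<^sub>v g"
proof (induction p)
  case Nil thus ?case by (simp add: Phi_path_Nil)
next
  case (Cons j p)
  have "map_vec abs (wavelet h j S *\<^sub>v 0\<^sub>v g) = 0\<^sub>v g" using Wc[of j] Cons.prems
    by (auto intro!: eq_vecI)
  thus ?case using Cons by (simp add: Phi_path_Cons)
qed

lemma gst_zero:
  assumes Wc: "\<And>j. j \<in> {1..J} \<Longrightarrow> wavelet h j S \<in> carrier_mat g g"
  shows "gst h J L S (0\<^sub>v g) = 0\<^sub>v (\<Sum>k<L. J ^ k)"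
proof (rule eq_vecI)
  show "dim_vec (gst h J L S (0\<^sub>v g)) = dim_vec (0\<^sub>v (\<Sum>k<L. J ^ k))" by (simp add: gst_dim)
  fix i assume "i < dim_vec (0\<^sub>v (\<Sum>k<L. J ^ k))"
  hence i: "i < length (gst_paths J L)" using gst_dim[of h J L S "0\<^sub>v g"] by (simp add: gst_def)
  have p: "set (gst_paths J L ! i) \<subseteq> {1..J}" by (rule gst_paths_set) (rule nth_mem[OF i])
  have "gst h J L S (0\<^sub>v g) $ i = phi_path h S (0\<^sub>v g) (gst_paths J L ! i)"
    using i by (simp add: gst_def vec_of_list_index)
  also have "\<dots> = 0" using Phi_zero[OF Wc p] by (simp add: phi_path_def)
  finally show "gst h J L S (0\<^sub>v g) $ i = 0\<^sub>v (\<Sum>k<L. J ^ k) $ i"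
    using i gst_dim[of h J L S "0\<^sub>v g"] by (simp add: gst_def)
qed

lemma gst_carrier: "gst h J L S x \<in> carrier_vec (\<Sum>k<L. J ^ k)"
  by (rule carrier_vecI) (rule gst_dim)

lemma sumB_nonneg: "(\<Sum>k<L. (B::real) ^ (2 * k)) \<ge> 0"
proof (intro sum_nonneg)
  fix k assume "k \<in> {..<L}"
  have "B ^ (2 * k) = (B ^ k)\<^sup>2" by (metis power_mult mult.commute)
  thus "B ^ (2 * k) \<ge> 0" by simp
qed

lemma gst_lip:
  fixes B :: real
  assumes Wc: "\<And>j. j \<in> {1..J} \<Longrightarrow> wavelet h j S \<in> carrier_mat g g"
    and Fr: "\<And>v. v \<in> carrier_vec g \<Longrightarrow> (\<Sum>j=1..J. (vnorm (wavelet h j S *\<^sub>v v))\<^sup>2) \<le> B\<^sup>2 * (vnorm v)\<^sup>2"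
    and u: "u \<in> carrier_vec g" and v: "v \<in> carrier_vec g" and g: "g > 0"
  shows "vnorm (gst h J L S u - gst h J L S v) \<le> sqrt (\<Sum>k<L. B ^ (2 * k)) * sqrt ((u - v) \<bullet> (u - v)) / sqrt (real g)"
proof -
  have "vnorm (gst h J L S u - gst h J L S v) \<le> sqrt ((\<Sum>k<L. B ^ (2 * k)) * ((u - v) \<bullet> (u - v)) / real g)"
    by (rule vnorm_le_sqrt[OF gst_diff_sq[OF Wc Fr u v g]])
  also have "\<dots> = sqrt (\<Sum>k<L. B ^ (2 * k)) * sqrt ((u - v) \<bullet> (u - v)) / sqrt (real g)"
    by (simp add: real_sqrt_mult real_sqrt_divide)
  finally show ?thesis .
qed

lemma gst_norm:
  fixes B :: real and u :: "real vec"
  assumes Wc: "\<And>j. j \<in> {1..J} \<Longrightarrow> wavelet h j S \<in> carrier_mat g g"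
    and Fr: "\<And>v. v \<in> carrier_vec g \<Longrightarrow> (\<Sum>j=1..J. (vnorm (wavelet h j S *\<^sub>v v))\<^sup>2) \<le> B\<^sup>2 * (vnorm v)\<^sup>2"
    and u: "u \<in> carrier_vec g" and g: "g > 0" and bd: "\<And>k. k < g \<Longrightarrow> \<bar>u $ k\<bar> \<le> 1"
  shows "vnorm (gst h J L S u) \<le> sqrt (\<Sum>k<L. B ^ (2 * k))"
proof -
  have z: "(0\<^sub>v g :: real vec) \<in> carrier_vec g" by simp
  have uu: "u \<bullet> u \<le> real g"
  proof -
    have "u \<bullet> u = (\<Sum>k<g. u $ k * u $ k)" using u by (simp add: scalar_prod_def lessThan_atLeast0)
    also have "\<dots> \<le> (\<Sum>k<g. 1)"
    proof (rule sum_mono)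
      fix k assume "k \<in> {..<g}"
      hence "\<bar>u $ k\<bar> \<le> 1" using bd by simp
      hence "\<bar>u $ k\<bar> * \<bar>u $ k\<bar> \<le> 1 * 1" by (intro mult_mono) auto
      thus "u $ k * u $ k \<le> 1" by (simp add: abs_mult_self_eq)
    qed
    finally show ?thesis by simp
  qed
  have "vnorm (gst h J L S u - gst h J L S (0\<^sub>v g)) \<le> sqrt (\<Sum>k<L. B ^ (2 * k)) * sqrt ((u - 0\<^sub>v g) \<bullet> (u - 0\<^sub>v g)) / sqrt (real g)"
    by (rule gst_lip[OF Wc Fr u z g])
  also have "gst h J L S u - gst h J L S (0\<^sub>v g) = gst h J L S u"
  proof -
    have "gst h J L S (0\<^sub>v g) = 0\<^sub>v (\<Sum>k<L. J ^ k)" using Wc by (rule gst_zero)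
    thus ?thesis using gst_carrier[of h J L S u] by simp
  qed
  also have "sqrt (\<Sum>k<L. B ^ (2 * k)) * sqrt ((u - 0\<^sub>v g) \<bullet> (u - 0\<^sub>v g)) / sqrt (real g)
      \<le> sqrt (\<Sum>k<L. B ^ (2 * k)) * sqrt (real g) / sqrt (real g)"
    using u uu sumB_nonneg[of B L] by (intro divide_right_mono mult_left_mono) auto
  also have "\<dots> = sqrt (\<Sum>k<L. B ^ (2 * k))" using g by simp
  finally show ?thesis .
qed



theorem theorem4p2:
  fixes n J L :: nat
    and g :: "nat \<Rightarrow> nat"
    and S :: "nat \<Rightarrow> real mat"
    and x :: "nat \<Rightarrow> real vec"
    and y :: "nat \<Rightarrow> 'y"
    and h :: "nat \<Rightarrow> real \<Rightarrow> real"
    and A B :: real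
    and l l' l'' :: "real \<Rightarrow> 'y \<Rightarrow> real"
    and lam C1 C2 gamma1 gamma2 :: real
    and wstar :: "real vec"
    and x' :: "real vec"
  assumes n_pos: "n \<ge> 1" and J_pos: "J \<ge> 1" and L_pos: "L \<ge> 1"
    and g_pos: "\<And>i. i < n \<Longrightarrow> g i \<ge> 1"
    and S_carrier: "\<And>i. i < n \<Longrightarrow> S i \<in> carrier_mat (g i) (g i)"
    and S_sym: "\<And>i. i < n \<Longrightarrow> transpose_mat (S i) = S i"
    and x_dim: "\<And>i. i < n \<Longrightarrow> x i \<in> carrier_vec (g i)"
    and frame_consts: "0 < A" "A \<le> B"
    and frame: "\<And>i v. i < n \<Longrightarrow> v \<in> carrier_vec (g i) \<Longrightarrow>
        A\<^sup>2 * (vnorm v)\<^sup>2 \<le> (\<Sum>j=1..J. (vnorm (wavelet h j (S i) *\<^sub>v v))\<^sup>2)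
      \<and> (\<Sum>j=1..J. (vnorm (wavelet h j (S i) *\<^sub>v v))\<^sup>2) \<le> B\<^sup>2 * (vnorm v)\<^sup>2"
    and l_deriv: "\<And>s c. ((\<lambda>t. l t c) has_real_derivative l' s c) (at s)"
    and l'_deriv: "\<And>s c. ((\<lambda>t. l' t c) has_real_derivative l'' s c) (at s)"
    and l_convex: "\<And>c. convex_on UNIV (\<lambda>t. l t c)"
    and lam_pos: "lam > 0"
    and x'_def: "x' = vec (g (n-1)) (\<lambda>k. if k = g (n-1) - 1 then 0 else x (n-1) $ k)"
    and A1: "\<And>i w. i < n \<Longrightarrow> w \<in> carrier_vec (\<Sum>k<L. J ^ k) \<Longrightarrow>
        vnorm (l' (scalar_prod w (gst h J L (S i) (x i))) (y i) \<cdot>\<^sub>v gst h J L (S i) (x i)) \<le> C1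
      \<and> vnorm (l' (scalar_prod w (gst h J L (S i) (if i = n-1 then x' else x i))) (y i)
              \<cdot>\<^sub>v gst h J L (S i) (if i = n-1 then x' else x i)) \<le> C1"
    and A2: "\<And>i w. i < n \<Longrightarrow> w \<in> carrier_vec (\<Sum>k<L. J ^ k) \<Longrightarrow>
        \<bar>l' (scalar_prod w (gst h J L (S i) (x i))) (y i)\<bar> \<le> C2
      \<and> \<bar>l' (scalar_prod w (gst h J L (S i) (if i = n-1 then x' else x i))) (y i)\<bar> \<le> C2"
    and A3: "\<And>i s t. i < n \<Longrightarrow> \<bar>l' s (y i) - l' t (y i)\<bar> \<le> gamma1 * \<bar>s - t\<bar>"
    and A4: "\<And>i s t. i < n \<Longrightarrow> \<bar>l'' s (y i) - l'' t (y i)\<bar> \<le> gamma2 * \<bar>s - t\<bar>"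
    and A5: "\<And>i k. i < n \<Longrightarrow> k < g i \<Longrightarrow> \<bar>x i $ k\<bar> \<le> 1"
    and wstar_dim: "wstar \<in> carrier_vec (\<Sum>k<L. J ^ k)"
    and wstar_min: "\<And>w. w \<in> carrier_vec (\<Sum>k<L. J ^ k) \<Longrightarrow>
        lossL l lam n (\<lambda>i. gst h J L (S i) (x i)) y wstar
          \<le> lossL l lam n (\<lambda>i. gst h J L (S i) (x i)) y w"
  shows
    "let Z = (\<lambda>i. gst h J L (S i) (x i));
         Z' = (\<lambda>i. gst h J L (S i) (if i = n-1 then x' else x i));
         Hw = hessL l'' lam n Z' y wstar;
         Delta = gradL l' lam n Z y wstar - gradL l' lam n Z' y wstar;
         w' = wstar + matinv Hw *\<^sub>v Delta;
         F = sqrt (\<Sum>k<L. B ^ (2 * k))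
     in vnorm (gradL l' lam n Z' y w')
          \<le> gamma2 * F ^ 3 / (lam\<^sup>2 * real n)
            * min (4 * C1\<^sup>2) ((gamma1 * C1 * F\<^sup>2 + lam * C2 * F)\<^sup>2 / (lam\<^sup>2 * real (g (n-1))))"
proof -
  define d where "d = (\<Sum>k<L. J ^ k)"
  define m where "m = n - 1"
  have m: "m < n" using n_pos by (simp add: m_def)
  define xx where "xx i = (if i = n-1 then x' else x i)" for i
  define Z where "Z i = gst h J L (S i) (x i)" for i
  define Z' where "Z' i = gst h J L (S i) (xx i)" for i
  define Hw where "Hw = hessL l'' lam n Z' y wstar"
  define Delta where "Delta = gradL l' lam n Z y wstar - gradL l' lam n Z' y wstar"
  define vv where "vv = matinv Hw *\<^sub>v Delta"
  define w' where "w' = wstar + vv"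
  define F where "F = sqrt (\<Sum>k<L. B ^ (2 * k))"
  have F0: "F \<ge> 0" unfolding F_def using sumB_nonneg[of B L] by simp
  have w: "wstar \<in> carrier_vec d" using wstar_dim by (simp add: d_def)
  have gp: "g i > 0" if "i < n" for i using g_pos[OF that] by simp
  have gm: "g m > 0" using gp[OF m] .
  have Wc: "\<And>j. j \<in> {1..J} \<Longrightarrow> wavelet h j (S i) \<in> carrier_mat (g i) (g i)" if i: "i < n" for i
    unfolding wavelet_def by (rule matfun_carrier[OF S_carrier[OF i] S_sym[OF i]])
  have Fr: "\<And>v. v \<in> carrier_vec (g i) \<Longrightarrow> (\<Sum>j=1..J. (vnorm (wavelet h j (S i) *\<^sub>v v))\<^sup>2) \<le> B\<^sup>2 * (vnorm v)\<^sup>2"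
    if i: "i < n" for i using frame[OF i] by blast
  have x'c: "x' \<in> carrier_vec (g m)" by (simp add: x'_def m_def)
  have xxc: "xx i \<in> carrier_vec (g i)" if i: "i < n" for i
    using x_dim[OF i] x'c by (simp add: xx_def m_def)
  have xxb: "\<bar>xx i $ k\<bar> \<le> 1" if i: "i < n" and k: "k < g i" for i k
  proof (cases "i = m")
    case True
    hence "xx i = x'" by (simp add: xx_def m_def)
    thus ?thesis using A5[OF m, of k] k True by (simp add: x'_def m_def)
  next
    case False
    thus ?thesis using A5[OF i k] by (simp add: xx_def m_def)
  qed
  have Zc: "Z i \<in> carrier_vec d" for i unfolding Z_def d_def by (rule gst_carrier)
  have Z'c: "Z' i \<in> carrier_vec d" for i unfolding Z'_def d_def by (rule gst_carrier)
  have Zn: "vnorm (Z i) \<le> F" if i: "i < n" for i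
    unfolding Z_def F_def by (rule gst_norm[OF Wc[OF i] Fr[OF i] x_dim[OF i] gp[OF i]]) (use A5[OF i] in auto)
  have Z'n: "vnorm (Z' i) \<le> F" if i: "i < n" for i
    unfolding Z'_def F_def by (rule gst_norm[OF Wc[OF i] Fr[OF i] xxc[OF i] gp[OF i]]) (use xxb[OF i] in auto)
  have ZZ': "Z i = Z' i" if "i \<noteq> m" for i using that by (simp add: Z_def Z'_def xx_def m_def)
  have Zdiff: "vnorm (Z m - Z' m) \<le> F / sqrt (real (g m))"
  proof -
    have xm: "x m \<in> carrier_vec (g m)" by (rule x_dim[OF m])
    have "(x m - x') \<bullet> (x m - x') \<le> 1"
    proof -
      have x'm: "x' = vec (g m) (\<lambda>k. if k = g m - 1 then 0 else x m $ k)" unfolding x'_def m_def by (rule refl)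
      have "(x m - x') \<bullet> (x m - x') = (\<Sum>k<g m. (x m - x') $ k * (x m - x') $ k)"
        using x'c by (simp add: scalar_prod_def lessThan_atLeast0)
      also have "\<dots> = (\<Sum>k<g m. if k = g m - 1 then (x m $ k) * (x m $ k) else 0)"
        by (rule sum.cong) (use xm in \<open>auto simp: x'm\<close>)
      also have "\<dots> = (x m $ (g m - 1)) * (x m $ (g m - 1))" using gm by simp
      also have "\<dots> \<le> 1"
      proof -
        have "\<bar>x m $ (g m - 1)\<bar> \<le> 1" using A5[OF m, of "g m - 1"] gm by simp
        hence "\<bar>x m $ (g m - 1)\<bar> * \<bar>x m $ (g m - 1)\<bar> \<le> 1 * 1" by (intro mult_mono) auto
        thus ?thesis by (simp add: abs_mult_self_eq)
      qed
      finally show ?thesis .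
    qed
    have "vnorm (Z m - Z' m) \<le> F * sqrt ((x m - x') \<bullet> (x m - x')) / sqrt (real (g m))"
      unfolding Z_def Z'_def F_def using gst_lip[OF Wc[OF m] Fr[OF m] xm x'c gm]
      by (simp add: xx_def m_def)
    also have "\<dots> \<le> F * 1 / sqrt (real (g m))"
      using \<open>(x m - x') \<bullet> (x m - x') \<le> 1\<close> F0 by (intro divide_right_mono mult_left_mono) auto
    finally show ?thesis by simp
  qed
  have zc: "(0\<^sub>v d :: real vec) \<in> carrier_vec d" by simp
  have C1: "C1 \<ge> 0" using A1[OF m, of "0\<^sub>v d"] vnorm_nonneg[of "l' (0\<^sub>v d \<bullet> gst h J L (S m) (x m)) (y m) \<cdot>\<^sub>v gst h J L (S m) (x m)"]
    by (simp add: d_def)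
  have C2: "C2 \<ge> 0" using A2[OF m, of "0\<^sub>v d"] by (simp add: d_def) (meson abs_ge_zero order_trans)
  have g1: "gamma1 \<ge> 0" using A3[OF m, of 1 0] by simp
  have g2: "gamma2 \<ge> 0" using A4[OF m, of 1 0] by simp
  have grad0: "gradL l' lam n Z y wstar = 0\<^sub>v d"
  proof -
    have Zfun: "Z = (\<lambda>i. gst h J L (S i) (x i))" by (rule ext) (simp add: Z_def)
    have wmin: "\<And>v. v \<in> carrier_vec d \<Longrightarrow> lossL l lam n Z y wstar \<le> lossL l lam n Z y v"
      using wstar_min unfolding Zfun d_def .
    show ?thesis by (rule grad_zero[OF _ l_deriv w wmin]) (use Zc in auto)
  qed
  have wn: "vnorm wstar \<le> C1 / lam"
    by (rule w_bound[OF _ n_pos lam_pos w grad0]) (use Zc A1 wstar_dim in \<open>auto simp: Z_def\<close>)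
  define cc where "cc = l' (wstar \<bullet> Z m) (y m)"
  define cc' where "cc' = l' (wstar \<bullet> Z' m) (y m)"
  have Dk: "Delta $ k = cc * Z m $ k - cc' * Z' m $ k" if k: "k < d" for k
  proof -
    have "Delta $ k = gradL l' lam n Z y wstar $ k - gradL l' lam n Z' y wstar $ k"
      using k w by (simp add: Delta_def gradL_def)
    also have "\<dots> = (\<Sum>i<n. l' (wstar \<bullet> Z i) (y i) * Z i $ k - l' (wstar \<bullet> Z' i) (y i) * Z' i $ k)"
      using k w by (simp add: gradL_idx sum_subtractf)
    also have "\<dots> = (\<Sum>i<n. if i = m then cc * Z m $ k - cc' * Z' m $ k else 0)"
      by (rule sum.cong) (auto simp: ZZ' cc_def cc'_def)
    also have "\<dots> = cc * Z m $ k - cc' * Z' m $ k" using m by simp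
    finally show ?thesis .
  qed
  have Dc: "Delta \<in> carrier_vec d" using w by (simp add: Delta_def gradL_def)
  have D1: "vnorm Delta \<le> 2 * C1"
  proof -
    have "Delta = cc \<cdot>\<^sub>v Z m - cc' \<cdot>\<^sub>v Z' m"
      using Dk Dc Zc[of m] Z'c[of m] by (intro eq_vecI) auto
    hence "vnorm Delta \<le> vnorm (cc \<cdot>\<^sub>v Z m) + vnorm (cc' \<cdot>\<^sub>v Z' m)"
      using vnorm_diff[of "cc \<cdot>\<^sub>v Z m" "cc' \<cdot>\<^sub>v Z' m"] Zc[of m] Z'c[of m] by simp
    also have "\<dots> \<le> C1 + C1"
      using A1[OF m wstar_dim] by (intro add_mono) (auto simp: cc_def cc'_def Z_def Z'_def xx_def m_def)
    finally show ?thesis by simp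
  qed
  have D2: "vnorm Delta \<le> (gamma1 * C1 * F\<^sup>2 + lam * C2 * F) / (lam * sqrt (real (g m)))"
  proof -
    have "Delta = (cc - cc') \<cdot>\<^sub>v Z m + cc' \<cdot>\<^sub>v (Z m - Z' m)"
      using Dk Dc Zc[of m] Z'c[of m] by (intro eq_vecI) (auto simp: algebra_simps)
    hence "vnorm Delta \<le> vnorm ((cc - cc') \<cdot>\<^sub>v Z m) + vnorm (cc' \<cdot>\<^sub>v (Z m - Z' m))"
      using vnorm_add[of "(cc - cc') \<cdot>\<^sub>v Z m" "cc' \<cdot>\<^sub>v (Z m - Z' m)"] Zc[of m] Z'c[of m] by simp
    also have "\<dots> = \<bar>cc - cc'\<bar> * vnorm (Z m) + \<bar>cc'\<bar> * vnorm (Z m - Z' m)" by (simp add: vnorm_smult)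
    also have "\<dots> \<le> (gamma1 * (C1 / lam) * (F / sqrt (real (g m)))) * F + C2 * (F / sqrt (real (g m)))"
    proof (rule add_mono)
      have "\<bar>cc - cc'\<bar> \<le> gamma1 * \<bar>wstar \<bullet> Z m - wstar \<bullet> Z' m\<bar>" unfolding cc_def cc'_def by (rule A3[OF m])
      also have "wstar \<bullet> Z m - wstar \<bullet> Z' m = wstar \<bullet> (Z m - Z' m)"
        using w Zc[of m] Z'c[of m] by (simp add: scalar_prod_minus_distrib)
      also have "\<bar>wstar \<bullet> (Z m - Z' m)\<bar> \<le> vnorm wstar * vnorm (Z m - Z' m)"
        using w Zc[of m] Z'c[of m] by (intro vnorm_cs) auto
      also have "\<dots> \<le> (C1 / lam) * (F / sqrt (real (g m)))"
        using wn Zdiff C1 lam_pos by (intro mult_mono) (auto simp: vnorm_nonneg)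
      finally have a: "\<bar>cc - cc'\<bar> \<le> gamma1 * ((C1 / lam) * (F / sqrt (real (g m))))"
        using g1 by (simp add: mult_left_mono)
      show "\<bar>cc - cc'\<bar> * vnorm (Z m) \<le> gamma1 * (C1 / lam) * (F / sqrt (real (g m))) * F"
        using mult_mono[OF a Zn[OF m]] g1 C1 lam_pos F0 vnorm_nonneg[of "Z m"] by (simp add: mult.assoc)
    next
      have "\<bar>cc'\<bar> \<le> C2" using A2[OF m wstar_dim] by (simp add: cc'_def Z'_def xx_def m_def)
      thus "\<bar>cc'\<bar> * vnorm (Z m - Z' m) \<le> C2 * (F / sqrt (real (g m)))"
        using Zdiff C2 by (intro mult_mono) (auto simp: vnorm_nonneg)
    qed
    also have "\<dots> = (gamma1 * C1 * F\<^sup>2 + lam * C2 * F) / (lam * sqrt (real (g m)))"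
      using lam_pos gm by (simp add: field_simps power2_eq_square)
    finally show ?thesis .
  qed
  have Dsq: "(vnorm Delta)\<^sup>2 \<le> min (4 * C1\<^sup>2) ((gamma1 * C1 * F\<^sup>2 + lam * C2 * F)\<^sup>2 / (lam\<^sup>2 * real (g m)))"
  proof -
    have "(vnorm Delta)\<^sup>2 \<le> (2 * C1)\<^sup>2" using D1 vnorm_nonneg[of Delta] by (intro power_mono) auto
    moreover have "(vnorm Delta)\<^sup>2 \<le> ((gamma1 * C1 * F\<^sup>2 + lam * C2 * F) / (lam * sqrt (real (g m))))\<^sup>2"
      using D2 vnorm_nonneg[of Delta] by (intro power_mono) auto
    moreover have "((gamma1 * C1 * F\<^sup>2 + lam * C2 * F) / (lam * sqrt (real (g m))))\<^sup>2
        = (gamma1 * C1 * F\<^sup>2 + lam * C2 * F)\<^sup>2 / (lam\<^sup>2 * real (g m))"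
      using gm by (simp add: power_divide power_mult_distrib)
    ultimately show ?thesis by (simp add: power_mult_distrib)
  qed
  have c2: "l'' (wstar \<bullet> Z' i) (y i) \<ge> 0" if "i < n" for i
    by (rule convex_second_deriv_nonneg[OF l_convex l_deriv l'_deriv])
  have npos: "real n * lam > 0" using n_pos lam_pos by simp
  have Hvv: "Hw *\<^sub>v vv = Delta" and vvc: "vv \<in> carrier_vec d" and vvn: "vnorm vv \<le> vnorm Delta / (real n * lam)"
    using newton_step_bound[where n=n and Z=Z' and d=d and w=wstar and l''=l'' and y=y and lam=lam and D=Delta]
      Z'c w c2 npos Dc unfolding Hw_def vv_def by auto
  define R where "R i = l' (w' \<bullet> Z' i) (y i) - l' (wstar \<bullet> Z' i) (y i) - l'' (wstar \<bullet> Z' i) (y i) * (Z' i \<bullet> vv)" for i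
  have w'c: "w' \<in> carrier_vec d" using w vvc by (simp add: w'_def)
  have gradw': "gradL l' lam n Z' y w' = vec d (\<lambda>k. \<Sum>i<n. R i * Z' i $ k)"
  proof (rule eq_vecI)
    fix k assume "k < dim_vec (vec d (\<lambda>k. \<Sum>i<n. R i * Z' i $ k))"
    hence k: "k < d" by simp
    have e1: "gradL l' lam n Z' y w' $ k = (\<Sum>i<n. l' (w' \<bullet> Z' i) (y i) * Z' i $ k) + real n * lam * w' $ k"
      by (rule gradL_idx) (use w'c k in simp)
    have e2: "gradL l' lam n Z' y wstar $ k = (\<Sum>i<n. l' (wstar \<bullet> Z' i) (y i) * Z' i $ k) + real n * lam * wstar $ k"
      by (rule gradL_idx) (use w k in simp)
    have e3: "gradL l' lam n Z' y wstar $ k = - Delta $ k"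
      using grad0 k w unfolding Delta_def by (simp add: gradL_def)
    have e4: "(Hw *\<^sub>v vv) $ k = (\<Sum>i<n. l'' (wstar \<bullet> Z' i) (y i) * (Z' i \<bullet> vv) * Z' i $ k) + real n * lam * vv $ k"
      unfolding Hw_def using hess_mv[where n=n and Z=Z' and d=d and w=wstar and v=vv and l''=l'' and lam=lam and y=y] Z'c w vvc k
      by auto
    have e5: "w' $ k = wstar $ k + vv $ k" using w vvc k by (simp add: w'_def)
    have e6: "(\<Sum>i<n. R i * Z' i $ k) = (\<Sum>i<n. l' (w' \<bullet> Z' i) (y i) * Z' i $ k)
       - (\<Sum>i<n. l' (wstar \<bullet> Z' i) (y i) * Z' i $ k) - (\<Sum>i<n. l'' (wstar \<bullet> Z' i) (y i) * (Z' i \<bullet> vv) * Z' i $ k)"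
      unfolding R_def by (simp add: sum_subtractf left_diff_distrib)
    have "gradL l' lam n Z' y w' $ k = (\<Sum>i<n. R i * Z' i $ k)"
      using e1 e2 e3 e4 e5 e6 Hvv by (simp add: algebra_simps)
    thus "gradL l' lam n Z' y w' $ k = vec d (\<lambda>k. \<Sum>i<n. R i * Z' i $ k) $ k" using k by simp
  qed (use w'c in \<open>simp add: gradL_def\<close>)
  have Rb: "\<bar>R i\<bar> \<le> gamma2 * (vnorm vv)\<^sup>2 * F\<^sup>2" if i: "i < n" for i
  proof -
    have "w' \<bullet> Z' i = wstar \<bullet> Z' i + vv \<bullet> Z' i"
      unfolding w'_def using w vvc Z'c[of i] by (simp add: add_scalar_prod_distrib[of _ d])
    moreover have "Z' i \<bullet> vv = vv \<bullet> Z' i" using comm_scalar_prod[OF Z'c vvc] .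
    ultimately have "R i = l' (wstar \<bullet> Z' i + vv \<bullet> Z' i) (y i) - l' (wstar \<bullet> Z' i) (y i)
        - l'' (wstar \<bullet> Z' i) (y i) * ((wstar \<bullet> Z' i + vv \<bullet> Z' i) - wstar \<bullet> Z' i)" by (simp add: R_def)
    hence "\<bar>R i\<bar> \<le> gamma2 * ((wstar \<bullet> Z' i + vv \<bullet> Z' i) - wstar \<bullet> Z' i)\<^sup>2"
      using remainder_bound[where f="\<lambda>t. l' t (y i)" and f'="\<lambda>t. l'' t (y i)" and \<gamma>=gamma2,
          OF l'_deriv A4[OF i], of "wstar \<bullet> Z' i + vv \<bullet> Z' i" "wstar \<bullet> Z' i"] by simp
    also have "\<dots> = gamma2 * (vv \<bullet> Z' i)\<^sup>2" by simp
    also have "\<dots> \<le> gamma2 * ((vnorm vv)\<^sup>2 * F\<^sup>2)"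
    proof -
      have "\<bar>vv \<bullet> Z' i\<bar> \<le> vnorm vv * vnorm (Z' i)" using vvc Z'c[of i] by (intro vnorm_cs) auto
      also have "\<dots> \<le> vnorm vv * F" using Z'n[OF i] by (intro mult_left_mono) (auto simp: vnorm_nonneg)
      finally have "\<bar>vv \<bullet> Z' i\<bar> \<le> vnorm vv * F" .
      hence "(vv \<bullet> Z' i)\<^sup>2 \<le> (vnorm vv * F)\<^sup>2"
        by (metis abs_ge_zero abs_le_square_iff order_trans power2_abs power_mono)
      thus ?thesis using g2 by (simp add: power_mult_distrib mult_left_mono)
    qed
    finally show ?thesis by (simp add: mult.assoc)
  qed
  have "vnorm (gradL l' lam n Z' y w') \<le> (\<Sum>i<n. \<bar>R i\<bar> * vnorm (Z' i))"
    unfolding gradw' by (rule vnorm_lincomb) (use Z'c in auto)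
  also have "\<dots> \<le> (\<Sum>i<n. gamma2 * (vnorm vv)\<^sup>2 * F\<^sup>2 * F)"
    using Rb Z'n by (intro sum_mono mult_mono) (auto simp: vnorm_nonneg g2)
  also have "\<dots> = real n * gamma2 * F ^ 3 * (vnorm vv)\<^sup>2"
    by (simp add: power2_eq_square power3_eq_cube mult_ac)
  also have "\<dots> \<le> real n * gamma2 * F ^ 3 * (vnorm Delta / (real n * lam))\<^sup>2"
    using vvn g2 F0 vnorm_nonneg[of vv] by (intro mult_left_mono power_mono) auto
  also have "\<dots> = gamma2 * F ^ 3 / (lam\<^sup>2 * real n) * (vnorm Delta)\<^sup>2"
    using n_pos lam_pos by (simp add: field_simps power2_eq_square)
  also have "\<dots> \<le> gamma2 * F ^ 3 / (lam\<^sup>2 * real n)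
      * min (4 * C1\<^sup>2) ((gamma1 * C1 * F\<^sup>2 + lam * C2 * F)\<^sup>2 / (lam\<^sup>2 * real (g m)))"
    using Dsq g2 F0 by (intro mult_left_mono) auto
  finally have final: "vnorm (gradL l' lam n Z' y w') \<le> gamma2 * F ^ 3 / (lam\<^sup>2 * real n)
      * min (4 * C1\<^sup>2) ((gamma1 * C1 * F\<^sup>2 + lam * C2 * F)\<^sup>2 / (lam\<^sup>2 * real (g m)))" .
  show ?thesis unfolding Let_def
    using final unfolding Z_def Z'_def xx_def w'_def vv_def Hw_def Delta_def F_def m_def Z_def .
qed


end
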